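(* Every spline $s\in\mathcal Z_{kl}^{\Delta\lambda,\Delta\mu}(\Omega)$ has a unique representation $$s(x,y)=\sum_{i=-k}^{g-1}\sum_{j=-l}^{h-1}z_{ij}\,Z_{ij}^{k+1,l+1}(x,y)+\sum_{i=-k}^{g-1}v_i\,Z_i^{k+1}(x,y)+\sum_{j=-l}^{h-1}u_j\,Z_j^{l+1}(x,y)$$ with real coefficients $z_{ij},v_i,u_j$.
   Context: Let $\Omega=[a,b]\times[c,d]\subset\mathbb R^2$ with $a<b$, $c<d$. Fix integers $g,h\ge 0$ and degrees $k,l\in\mathbb N_0$. Take knots $a=\lambda_0<\lambda_1<\dots<\lambda_g<\lambda_{g+1}=b$ and $c=\mu_0<\mu_1<\dots<\mu_h<\mu_{h+1}=d$, extended by coincident boundary knots $\lambda_{-k}=\dots=\lambda_0=a$, $\lambda_{g+1}=\dots=\lambda_{g+k+1}=b$, and $\mu_{-l}=\dots=\mu_0=c$, $\mu_{h+1}=\dots=\mu_{h+l+1}=d$. For $i=-k,\dots,g$ let $B_i^{k+1}(x)$ denote the (normalized) B-spline of degree $k$ with knots $\lambda_i,\dots,\lambda_{i+k+1}$, so that $\sum_{i=-k}^g B_i^{k+1}(x)=1$ on $[a,b]$; similarly $B_j^{l+1}(y)$, $j=-l,\dots,h$, is the B-spline of degree $l$ with knots $\mu_j,\dots,\mu_{j+l+1}$. Let $\mathcal S_{kl}^{\Delta\lambda,\Delta\mu}(\Omega)$ be the span of the functions $B_i^{k+1}(x)B_j^{l+1}(y)$, and $\mathcal Z_{kl}^{\Delta\lambda,\Delta\mu}(\Omega)=\{s\in\mathcal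 S_{kl}^{\Delta\lambda,\Delta\mu}(\Omega):\iint_\Omega s\,dx\,dy=0\}$. The univariate ZB-splines are, for $i=-k,\dots,g-1$, $$Z_i^{k+1}(x)=(k+1)\Big(\frac{B_i^{k+1}(x)}{\lambda_{i+k+1}-\lambda_i}-\frac{B_{i+1}^{k+1}(x)}{\lambda_{i+k+2}-\lambda_{i+1}}\Big),$$ and analogously $Z_j^{l+1}(y)=(l+1)\big(\frac{B_j^{l+1}(y)}{\mu_{j+l+1}-\mu_j}-\frac{B_{j+1}^{l+1}(y)}{\mu_{j+l+2}-\mu_{j+1}}\big)$ for $j=-l,\dots,h-1$. The bivariate ZB-splines are $Z_{ij}^{k+1,l+1}(x,y)=Z_i^{k+1}(x)Z_j^{l+1}(y)$, $Z_i^{k+1}(x,y)=Z_i^{k+1}(x)$ and $Z_j^{l+1}(x,y)=Z_j^{l+1}(y)$. *)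

theory Defs
  imports "HOL-Analysis.Analysis" "HOL-Library.FuncSet"
begin

text \<open>Extended knot sequence: lam (-k) = ... = lam 0 = a < lam 1 < ... < lam g < lam (g+1) = ... = lam (g+k+1) = b.
  Knots are indexed by integers; values outside -k..g+k+1 are irrelevant.\<close>
definition knot_seq :: "real \<Rightarrow> real \<Rightarrow> nat \<Rightarrow> nat \<Rightarrow> (int \<Rightarrow> real) \<Rightarrow> bool" where
  "knot_seq a b g k lam \<longleftrightarrow> a < b \<and>
     (\<forall>i\<in>{- int k..0}. lam i = a) \<and>
     (\<forall>i\<in>{int g + 1..int g + int k + 1}. lam i = b) \<and>
     (\<forall>i\<in>{0..int g}. lam i < lam (i + 1))"

text \<open>Normalized B-spline of degree p with knots lam i, ..., lam (i+p+1), via the Cox--de Boor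
  recursion (with the convention 0/0 = 0, which is Isabelle's x/0 = 0).  The degree-0 splines are
  indicators of half-open intervals, the last nondegenerate one closed at the right end b, so that
  the B-splines sum to 1 on the whole closed interval [a,b].\<close>
fun bspline :: "(int \<Rightarrow> real) \<Rightarrow> real \<Rightarrow> nat \<Rightarrow> int \<Rightarrow> real \<Rightarrow> real" where
  "bspline lam b 0 i x =
     (if lam i \<le> x \<and> (x < lam (i + 1) \<or> (x = b \<and> lam (i + 1) = b \<and> lam i < lam (i + 1)))
      then 1 else 0)"
| "bspline lam b (Suc p) i x =
     (x - lam i) / (lam (i + int p + 1) - lam i) * bspline lam b p i x
     + (lam (i + int p + 2) - x) / (lam (i + int p + 2) - lam (i + 1)) * bspline lam b p (i + 1) x"

definition zbspline :: "(int \<Rightarrow> real) \<Rightarrow> real \<Rightarrow> nat \<Rightarrow> int \<Rightarrow> real \<Rightarrow> real" where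
  "zbspline lam b k i x = real (k + 1) *
     (bspline lam b k i x / (lam (i + int k + 1) - lam i)
      - bspline lam b k (i + 1) x / (lam (i + int k + 2) - lam (i + 1)))"

definition spline_space ::
  "real \<Rightarrow> real \<Rightarrow> real \<Rightarrow> real \<Rightarrow> nat \<Rightarrow> nat \<Rightarrow> nat \<Rightarrow> nat \<Rightarrow> (int \<Rightarrow> real) \<Rightarrow> (int \<Rightarrow> real)
     \<Rightarrow> (real \<Rightarrow> real \<Rightarrow> real) set" where
  "spline_space a b c d g h k l lam mu =
     {s. \<exists>coef :: int \<Rightarrow> int \<Rightarrow> real. \<forall>x\<in>{a..b}. \<forall>y\<in>{c..d}.
         s x y = (\<Sum>i\<in>{- int k..int g}. \<Sum>j\<in>{- int l..int h}.
                    coef i j * bspline lam b k i x * bspline mu d l j y)}"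

definition zspline_space ::
  "real \<Rightarrow> real \<Rightarrow> real \<Rightarrow> real \<Rightarrow> nat \<Rightarrow> nat \<Rightarrow> nat \<Rightarrow> nat \<Rightarrow> (int \<Rightarrow> real) \<Rightarrow> (int \<Rightarrow> real)
     \<Rightarrow> (real \<Rightarrow> real \<Rightarrow> real) set" where
  "zspline_space a b c d g h k l lam mu =
     {s \<in> spline_space a b c d g h k l lam mu.
        integral (cbox (a, c) (b, d)) (\<lambda>(x, y). s x y) = 0}"

end

theory Submission
  imports Defs
begin

lemma sum_Icc_top: "m \<le> n + 1 \<Longrightarrow> (\<Sum>i\<in>{m..n+1::int}. f i) = (\<Sum>i\<in>{m..n}. f i) + f (n+1)"
proof -
  assume "m \<le> n + 1"
  then have "{m..n+1} = insert (n+1) {m..n}" by auto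
  then show ?thesis by (simp add: add.commute)
qed

lemma sum_Icc_bot: "m \<le> n \<Longrightarrow> (\<Sum>i\<in>{m..n::int}. f i) = f m + (\<Sum>i\<in>{m+1..n}. f i)"
proof -
  assume "m \<le> n"
  then have "{m..n} = insert m {m+1..n}" by auto
  then show ?thesis by simp
qed

lemma sum_Icc_shift: "(\<Sum>i\<in>{m..n::int}. f (i+1)) = (\<Sum>i\<in>{m+1..n+1}. f i)"
  by (rule sum.reindex_bij_witness[of _ "\<lambda>i. i - 1" "\<lambda>i. i + 1"]) auto

lemma alg:
  fixes t0 t1 t2 tp1 tp2 tp3 x B0 B1 B2 n :: real
  assumes "t0 \<le> t1" "t1 \<le> tp2" "tp2 \<le> tp3"
  shows "1 / (tp2 - t0) * ((x - t0) / (tp1 - t0) * B0 + (tp2 - x) / (tp2 - t1) * B1)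
     + (x - t0) / (tp2 - t0) * (n * (B0 / (tp1 - t0) - B1 / (tp2 - t1)))
     + (-1 / (tp3 - t1)) * ((x - t1) / (tp2 - t1) * B1 + (tp3 - x) / (tp3 - t2) * B2)
     + (tp3 - x) / (tp3 - t1) * (n * (B1 / (tp2 - t1) - B2 / (tp3 - t2)))
   = (n + 1) * (((x - t0) / (tp1 - t0) * B0 + (tp2 - x) / (tp2 - t1) * B1) / (tp2 - t0)
              - ((x - t1) / (tp2 - t1) * B1 + (tp3 - x) / (tp3 - t2) * B2) / (tp3 - t1))"
    (is "?L = ?R")
proof -
  have key: "?L - ?R = n * B1 * inverse (tp2 - t1) * ((tp3 - t1) * inverse (tp3 - t1) - (tp2 - t0) * inverse (tp2 - t0))"
    unfolding divide_inverse by algebra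
  have "n * B1 * inverse (tp2 - t1) * ((tp3 - t1) * inverse (tp3 - t1) - (tp2 - t0) * inverse (tp2 - t0)) = 0"
  proof (cases "tp2 - t1 = 0")
    case True then show ?thesis by simp
  next
    case False
    then have "tp2 - t0 \<noteq> 0" "tp3 - t1 \<noteq> 0" using assms by auto
    then show ?thesis by simp
  qed
  with key show ?thesis by simp
qed

lemma B0_deriv:
  assumes "x \<noteq> lam j" "x \<noteq> lam (j+1)" "x \<noteq> b"
  shows "(bspline lam b 0 j has_real_derivative 0) (at x)"
proof -
  define d where "d = min \<bar>x - lam j\<bar> (min \<bar>x - lam (j+1)\<bar> \<bar>x - b\<bar>)"
  have d: "d > 0" using assms unfolding d_def by auto
  have "eventually (\<lambda>y. bspline lam b 0 j x = bspline lam b 0 j y) (nhds x)"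
    unfolding eventually_nhds_metric
  proof (intro exI[of _ d] conjI allI impI d)
    fix y assume "dist y x < d"
    then have h: "\<bar>y - x\<bar> < d" by (simp add: dist_real_def)
    have "(lam j \<le> y) = (lam j \<le> x)" "(y < lam (j+1)) = (x < lam (j+1))" "y \<noteq> b"
      using h unfolding d_def by auto
    then show "bspline lam b 0 j x = bspline lam b 0 j y" using assms by simp
  qed
  then have "((\<lambda>y. bspline lam b 0 j x) has_real_derivative 0) (at x) \<longleftrightarrow> (bspline lam b 0 j has_real_derivative 0) (at x)"
    by (intro DERIV_cong_ev) auto
  then show ?thesis by simp
qed

lemma comb:
  fixes F G :: "real \<Rightarrow> real"
  assumes "(F has_real_derivative F') (at x)" "(G has_real_derivative G') (at x)"
  shows "((\<lambda>y. (y - c1) / e1 * F y + (c2 - y) / e2 * G y) has_real_derivative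
     (1 / e1 * F x + (x - c1) / e1 * F' + - 1 / e2 * G x + (c2 - x) / e2 * G')) (at x)"
proof -
  have l1: "((\<lambda>y. (y - c1) / e1) has_real_derivative 1 / e1) (at x)"
  proof -
    have "((\<lambda>y. y - c1) has_real_derivative 1 - 0) (at x)" by (intro DERIV_diff DERIV_ident DERIV_const)
    from DERIV_cdivide[OF this, of e1] show ?thesis by simp
  qed
  have l2: "((\<lambda>y. (c2 - y) / e2) has_real_derivative - 1 / e2) (at x)"
  proof -
    have "((\<lambda>y. c2 - y) has_real_derivative 0 - 1) (at x)" by (intro DERIV_diff DERIV_ident DERIV_const)
    from DERIV_cdivide[OF this, of e2] show ?thesis by simp
  qed
  show ?thesis by (rule DERIV_cong[OF DERIV_add[OF DERIV_mult[OF l1 assms(1)] DERIV_mult[OF l2 assms(2)]]]) (simp add: algebra_simps)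
qed

lemma sum_tele_int: "m \<le> n + 1 \<Longrightarrow> (\<Sum>j\<in>{m..n::int}. f j - f (j+1)) = f m - (f (n+1) :: real)"
proof -
  have "\<forall>n. n = m + int d - 1 \<longrightarrow> (\<Sum>j\<in>{m..n::int}. f j - f (j+1)) = f m - f (n+1)" for d
  proof (induction d)
    case 0 then show ?case by simp
  next
    case (Suc d)
    show ?case
    proof (intro allI impI)
      fix n assume n: "n = m + int (Suc d) - 1"
      have "(\<Sum>j\<in>{m..(n-1)+1}. f j - f (j+1)) = (\<Sum>j\<in>{m..n-1}. f j - f (j+1)) + (f (n-1+1) - f (n-1+1+1))"
        using n by (intro sum_Icc_top) auto
      also have "(\<Sum>j\<in>{m..n-1}. f j - f (j+1)) = f m - f (n-1+1)" using Suc.IH n by auto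
      finally show "(\<Sum>j\<in>{m..n}. f j - f (j+1)) = f m - f (n+1)" by simp
    qed
  qed
  moreover assume "m \<le> n + 1"
  then have "n = m + int (nat (n + 1 - m)) - 1" by simp
  ultimately show ?thesis by blast
qed

lemma meas_B: "bspline lam b p i \<in> borel_measurable borel"
proof (induction p arbitrary: i)
  case 0 show ?case by simp measurable
next
  case (Suc p)
  show ?case using Suc.IH[of i] Suc.IH[of "i+1"] by simp measurable
qed

lemma prod_has_integral:
  fixes f g :: "real \<Rightarrow> real"
  assumes fm[measurable]: "f \<in> borel_measurable borel" and gm[measurable]: "g \<in> borel_measurable borel"
    and fb: "\<forall>x\<in>{a..b}. \<bar>f x\<bar> \<le> Mf" and gb: "\<forall>y\<in>{c..d}. \<bar>g y\<bar> \<le> Mg"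
    and fi: "(f has_integral I) {a..b}" and gi: "(g has_integral K) {c..d}"
  shows "((\<lambda>(x, y). f x * g y) has_integral (I * K)) (cbox (a, c) (b, d))"
proof -
  define F where "F x = indicator {a..b} x * f x" for x :: real
  define G where "G y = indicator {c..d} y * g y" for y :: real
  have Fm[measurable]: "F \<in> borel_measurable borel" unfolding F_def by measurable
  have Gm[measurable]: "G \<in> borel_measurable borel" unfolding G_def by measurable
  have Fint: "integrable lborel F" unfolding F_def
    using integrableI_bounded_set_indicator[of "{a..b}" lborel f Mf] fb by (simp add: emeasure_lborel_Icc_eq)
  have Gint: "integrable lborel G" unfolding G_def
    using integrableI_bounded_set_indicator[of "{c..d}" lborel g Mg] gb by (simp add: emeasure_lborel_Icc_eq)
  have F_eq: "F = (\<lambda>x. if x \<in> {a..b} then f x else 0)" unfolding F_def by (auto simp: indicator_def)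
  have G_eq: "G = (\<lambda>x. if x \<in> {c..d} then g x else 0)" unfolding G_def by (auto simp: indicator_def)
  have "(F has_integral I) UNIV" using fi unfolding F_eq has_integral_restrict_UNIV .
  then have IF: "integral\<^sup>L lborel F = I" using has_integral_integral_lborel[OF Fint] has_integral_unique by blast
  have "(G has_integral K) UNIV" using gi unfolding G_eq has_integral_restrict_UNIV .
  then have IG: "integral\<^sup>L lborel G = K" using has_integral_integral_lborel[OF Gint] has_integral_unique by blast
  define P where "P = (\<lambda>(x, y). F x * G y)"
  have Pm[measurable]: "P \<in> borel_measurable (lborel \<Otimes>\<^sub>M lborel)" unfolding P_def by measurable
  have Pint: "integrable (lborel \<Otimes>\<^sub>M lborel) P"
  proof (rule lborel_pair.Fubini_integrable)
    show "integrable lborel (\<lambda>x. \<integral>y. norm (P (x, y)) \<partial>lborel)"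
      unfolding P_def by (simp add: abs_mult Gint Fint)
    show "AE x in lborel. integrable lborel (\<lambda>y. P (x, y))"
      unfolding P_def by (simp add: Gint)
  qed simp
  have "integral\<^sup>L (lborel \<Otimes>\<^sub>M lborel) P = (\<integral>x. (\<integral>y. P (x, y) \<partial>lborel) \<partial>lborel)"
    using lborel_pair.integral_fst'[OF Pint] by simp
  also have "\<dots> = I * K" unfolding P_def using IF IG by simp
  finally have PI: "integral\<^sup>L lborel P = I * K" by (simp add: lborel_prod)
  have Pint2: "integrable lborel P" using Pint by (simp add: lborel_prod)
  have "(P has_integral I * K) UNIV" using has_integral_integral_lborel[OF Pint2] PI by simp
  moreover have "P = (\<lambda>p. if p \<in> cbox (a, c) (b, d) then (\<lambda>(x, y). f x * g y) p else 0)"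
    unfolding P_def F_def G_def by (auto simp: indicator_def fun_eq_iff)
  ultimately have "((\<lambda>p. if p \<in> cbox (a, c) (b, d) then (\<lambda>(x, y). f x * g y) p else 0) has_integral I * K) UNIV"
    by simp
  then show ?thesis unfolding has_integral_restrict_UNIV .
qed

definition goodf :: "(real \<Rightarrow> real) \<Rightarrow> real \<Rightarrow> real \<Rightarrow> real \<Rightarrow> bool" where
  "goodf f I u0 w0 \<longleftrightarrow> f \<in> borel_measurable borel \<and> (\<exists>M. \<forall>x\<in>{u0..w0}. \<bar>f x\<bar> \<le> M) \<and> (f has_integral I) {u0..w0}"

lemma good_const: "u0 \<le> w0 \<Longrightarrow> goodf (\<lambda>x. r) (r * (w0 - u0)) u0 w0"
  unfolding goodf_def using has_integral_const_real[of r u0 w0] by (auto simp: mult.commute)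

lemma good_scale: "goodf f I u0 w0 \<Longrightarrow> goodf (\<lambda>x. r * f x) (r * I) u0 w0"
proof -
  assume "goodf f I u0 w0"
  then obtain M where f: "f \<in> borel_measurable borel" "\<forall>x\<in>{u0..w0}. \<bar>f x\<bar> \<le> M" "(f has_integral I) {u0..w0}"
    unfolding goodf_def by blast
  have "\<forall>x\<in>{u0..w0}. \<bar>r * f x\<bar> \<le> \<bar>r\<bar> * M" using f(2) by (simp add: abs_mult mult_left_mono)
  then show ?thesis unfolding goodf_def using f by (auto intro: has_integral_mult_right)
qed

lemma good_prod: "goodf f I a b \<Longrightarrow> goodf g K c d \<Longrightarrow> I * K = V \<Longrightarrow> (\<And>p. h p = f (fst p) * g (snd p)) \<Longrightarrow>
   (h has_integral V) (cbox (a, c) (b, d))"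
proof -
  assume f: "goodf f I a b" and g: "goodf g K c d" and V: "I * K = V" and h: "\<And>p. h p = f (fst p) * g (snd p)"
  obtain Mf Mg where "f \<in> borel_measurable borel" "g \<in> borel_measurable borel"
    "\<forall>x\<in>{a..b}. \<bar>f x\<bar> \<le> Mf" "\<forall>x\<in>{c..d}. \<bar>g x\<bar> \<le> Mg"
    "(f has_integral I) {a..b}" "(g has_integral K) {c..d}"
    using f g unfolding goodf_def by blast
  from prod_has_integral[OF this] have "((\<lambda>(x, y). f x * g y) has_integral I * K) (cbox (a, c) (b, d))" .
  moreover have "(\<lambda>(x, y). f x * g y) = h" using h by auto
  ultimately show ?thesis using V by simp
qed

lemma swap3: "(\<Sum>i\<in>I. \<Sum>j\<in>J. \<Sum>p\<in>P. g i j p) = (\<Sum>p\<in>P. \<Sum>i\<in>I. \<Sum>j\<in>J. (g i j p :: real))"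
proof -
  have "(\<Sum>j\<in>J. \<Sum>p\<in>P. g i j p) = (\<Sum>p\<in>P. \<Sum>j\<in>J. g i j p)" for i by (rule sum.swap)
  then have "(\<Sum>i\<in>I. \<Sum>j\<in>J. \<Sum>p\<in>P. g i j p) = (\<Sum>i\<in>I. \<Sum>p\<in>P. \<Sum>j\<in>J. g i j p)" by simp
  also have "\<dots> = (\<Sum>p\<in>P. \<Sum>i\<in>I. \<Sum>j\<in>J. g i j p)" by (rule sum.swap)
  finally show ?thesis .
qed

lemma swap4: "(\<Sum>i\<in>I. \<Sum>j\<in>J. \<Sum>p\<in>P. \<Sum>q\<in>Q. g i j p q) = (\<Sum>p\<in>P. \<Sum>q\<in>Q. \<Sum>i\<in>I. \<Sum>j\<in>J. (g i j p q :: real))"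
proof -
  have "(\<Sum>i\<in>I. \<Sum>j\<in>J. \<Sum>p\<in>P. \<Sum>q\<in>Q. g i j p q) = (\<Sum>p\<in>P. \<Sum>i\<in>I. \<Sum>j\<in>J. \<Sum>q\<in>Q. g i j p q)"
    by (rule swap3)
  also have "\<dots> = (\<Sum>p\<in>P. \<Sum>q\<in>Q. \<Sum>i\<in>I. \<Sum>j\<in>J. g i j p q)"
    by (intro sum.cong refl swap3)
  finally show ?thesis .
qed

lemma expand:
  fixes coef :: "'i \<Rightarrow> 'j \<Rightarrow> real" and A :: "'i \<Rightarrow> real" and A' :: "'j \<Rightarrow> real"
  shows "(\<Sum>i\<in>I. \<Sum>j\<in>Jj. coef i j * ((A i + (\<Sum>p\<in>P. Bx i p * X p)) * (A' j + (\<Sum>q\<in>Q. By j q * Y q))))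
   = (\<Sum>i\<in>I. \<Sum>j\<in>Jj. coef i j * A i * A' j)
     + (\<Sum>p\<in>P. (\<Sum>i\<in>I. \<Sum>j\<in>Jj. coef i j * A' j * Bx i p) * X p)
     + (\<Sum>q\<in>Q. (\<Sum>i\<in>I. \<Sum>j\<in>Jj. coef i j * A i * By j q) * Y q)
     + (\<Sum>p\<in>P. \<Sum>q\<in>Q. (\<Sum>i\<in>I. \<Sum>j\<in>Jj. coef i j * Bx i p * By j q) * (X p * Y q))"
proof -
  have e: "coef i j * ((A i + (\<Sum>p\<in>P. Bx i p * X p)) * (A' j + (\<Sum>q\<in>Q. By j q * Y q)))
    = coef i j * A i * A' j + (\<Sum>p\<in>P. coef i j * A' j * Bx i p * X p) + (\<Sum>q\<in>Q. coef i j * A i * By j q * Y q)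
      + (\<Sum>p\<in>P. \<Sum>q\<in>Q. coef i j * Bx i p * By j q * (X p * Y q))" for i j
  proof -
    have "(\<Sum>p\<in>P. Bx i p * X p) * (\<Sum>q\<in>Q. By j q * Y q) = (\<Sum>p\<in>P. \<Sum>q\<in>Q. Bx i p * By j q * (X p * Y q))"
      by (simp add: sum_product algebra_simps)
    then show ?thesis
      by (simp add: algebra_simps sum_distrib_left sum_distrib_right sum.distrib)
  qed
  have t2: "(\<Sum>i\<in>I. \<Sum>j\<in>Jj. \<Sum>p\<in>P. coef i j * A' j * Bx i p * X p) = (\<Sum>p\<in>P. (\<Sum>i\<in>I. \<Sum>j\<in>Jj. coef i j * A' j * Bx i p) * X p)"
    by (subst swap3) (simp add: sum_distrib_right)
  have t3: "(\<Sum>i\<in>I. \<Sum>j\<in>Jj. \<Sum>q\<in>Q. coef i j * A i * By j q * Y q) = (\<Sum>q\<in>Q. (\<Sum>i\<in>I. \<Sum>j\<in>Jj. coef i j * A i * By j q) * Y q)"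
    by (subst swap3) (simp add: sum_distrib_right)
  have t4: "(\<Sum>i\<in>I. \<Sum>j\<in>Jj. \<Sum>p\<in>P. \<Sum>q\<in>Q. coef i j * Bx i p * By j q * (X p * Y q)) = (\<Sum>p\<in>P. \<Sum>q\<in>Q. (\<Sum>i\<in>I. \<Sum>j\<in>Jj. coef i j * Bx i p * By j q) * (X p * Y q))"
    by (subst swap4) (simp add: sum_distrib_right)
  show ?thesis unfolding e sum.distrib t2 t3 t4 ..
qed

locale kseq =
  fixes a b :: real and g k :: nat and lam :: "int \<Rightarrow> real"
  assumes ks: "knot_seq a b g k lam"
begin

abbreviation "lo \<equiv> - int k"
abbreviation "hi \<equiv> int g + int k + 1"
abbreviation "B \<equiv> bspline lam b"

lemma ab: "a < b" using ks by (simp add: knot_seq_def)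
lemma lam_a: "lo \<le> i \<Longrightarrow> i \<le> 0 \<Longrightarrow> lam i = a" using ks by (simp add: knot_seq_def)
lemma lam_b: "int g + 1 \<le> i \<Longrightarrow> i \<le> hi \<Longrightarrow> lam i = b" using ks by (simp add: knot_seq_def)
lemma lam_strict1: "0 \<le> i \<Longrightarrow> i \<le> int g \<Longrightarrow> lam i < lam (i+1)" using ks by (simp add: knot_seq_def)

lemma mono1: "lo \<le> i \<Longrightarrow> i + 1 \<le> hi \<Longrightarrow> lam i \<le> lam (i+1)"
proof -
  assume h: "lo \<le> i" "i + 1 \<le> hi"
  show ?thesis
  proof (cases "i < 0")
    case True then show ?thesis using lam_a[of i] lam_a[of "i+1"] h by simp
  next
    case False
    show ?thesis
    proof (cases "i \<le> int g")
      case True then show ?thesis using lam_strict1[of i] False by simp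
    next
      case F2: False then show ?thesis using lam_b[of i] lam_b[of "i+1"] h by simp
    qed
  qed
qed

lemma mono_n: "lo \<le> i \<Longrightarrow> i + int n \<le> hi \<Longrightarrow> lam i \<le> lam (i + int n)"
proof (induction n)
  case 0 then show ?case by simp
next
  case (Suc n)
  then have "lam i \<le> lam (i + int n)" by simp
  also have "\<dots> \<le> lam (i + int n + 1)" using Suc.prems by (intro mono1) auto
  finally show ?case by (simp add: add_ac)
qed

lemma mono: "lo \<le> i \<Longrightarrow> i \<le> j \<Longrightarrow> j \<le> hi \<Longrightarrow> lam i \<le> lam j"
  using mono_n[of i "nat (j - i)"] by simp

lemma strict_n: "0 \<le> i \<Longrightarrow> i + int n \<le> int g + 1 \<Longrightarrow> n > 0 \<Longrightarrow> lam i < lam (i + int n)"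
proof (induction n)
  case 0 then show ?case by simp
next
  case (Suc n)
  show ?case
  proof (cases "n = 0")
    case True then show ?thesis using lam_strict1[of i] Suc.prems by simp
  next
    case False
    then have "lam i < lam (i + int n)" using Suc by simp
    also have "\<dots> < lam (i + int n + 1)" using Suc.prems by (intro lam_strict1) auto
    finally show ?thesis by (simp add: add_ac)
  qed
qed

lemma strict: "0 \<le> i \<Longrightarrow> i < j \<Longrightarrow> j \<le> int g + 1 \<Longrightarrow> lam i < lam j"
  using strict_n[of i "nat (j - i)"] by simp

lemma lam_range: "lo \<le> i \<Longrightarrow> i \<le> hi \<Longrightarrow> a \<le> lam i \<and> lam i \<le> b"
  using mono[of lo i] mono[of i hi] lam_a[of lo] lam_b[of hi] by simp

lemma lam_len_pos: "lo \<le> i \<Longrightarrow> i \<le> int g \<Longrightarrow> lam i < lam (i + int k + 1)"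
proof -
  assume h: "lo \<le> i" "i \<le> int g"
  have "lam i \<le> lam (max i 0)" using h by (intro mono) auto
  also have "\<dots> < lam (min (i + int k + 1) (int g + 1))" using h by (intro strict) auto
  also have "\<dots> \<le> lam (i + int k + 1)" using h by (intro mono) auto
  finally show ?thesis .
qed

lemma supp_left: "lo \<le> i \<Longrightarrow> i + int p + 1 \<le> hi \<Longrightarrow> x < lam i \<Longrightarrow> B p i x = 0"
proof (induction p arbitrary: i)
  case 0 then show ?case by simp
next
  case (Suc p)
  have "B p i x = 0" using Suc by simp
  moreover have "B p (i+1) x = 0"
    using Suc.prems mono1[of i] by (intro Suc.IH) auto
  ultimately show ?case by simp
qed

lemma supp_right: "lo \<le> i \<Longrightarrow> i + int p + 1 \<le> hi \<Longrightarrow> x > lam (i + int p + 1) \<or> (x \<ge> lam (i + int p + 1) \<and> x \<noteq> b) \<Longrightarrow> B p i x = 0"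
proof (induction p arbitrary: i)
  case 0 then show ?case by auto
next
  case (Suc p)
  define j where "j = i + int p + 1"
  have eqs: "i + int (Suc p) + 1 = j + 1" "i + 1 + int p + 1 = j + 1" "i + int p + 2 = j + 1" "i + int p + 1 = j"
    by (simp_all add: j_def)
  have pr: "lo \<le> i" "j + 1 \<le> hi" "x > lam (j+1) \<or> (x \<ge> lam (j+1) \<and> x \<noteq> b)"
    using Suc.prems unfolding eqs by auto
  have m: "lam j \<le> lam (j+1)" using pr by (intro mono) (auto simp: j_def)
  have ih1: "B p i x = 0" using Suc.IH[of i] pr m unfolding eqs by auto
  have ih2: "B p (i+1) x = 0" using Suc.IH[of "i+1"] pr unfolding eqs by auto
  show ?case by (simp add: ih1 ih2)
qed

lemma nonneg: "lo \<le> i \<Longrightarrow> i + int p + 1 \<le> hi \<Longrightarrow> B p i x \<ge> 0"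
proof (induction p arbitrary: i)
  case 0 then show ?case by simp
next
  case (Suc p)
  define j where "j = i + int p + 1"
  have eqs: "i + int (Suc p) + 1 = j + 1" "i + 1 + int p + 1 = j + 1" "i + int p + 2 = j + 1" "i + int p + 1 = j"
    by (simp_all add: j_def)
  have pr: "lo \<le> i" "j + 1 \<le> hi"
    using Suc.prems unfolding eqs by auto
  have t1: "(x - lam i) / (lam j - lam i) * B p i x \<ge> 0"
  proof (cases "x < lam i")
    case True then show ?thesis using supp_left[of i p x] pr by (simp add: j_def)
  next
    case False
    have "lam i \<le> lam j" using pr by (intro mono) (auto simp: j_def)
    moreover have "B p i x \<ge> 0" using Suc.IH[of i] pr unfolding eqs by auto
    ultimately show ?thesis using False by (intro mult_nonneg_nonneg divide_nonneg_nonneg) auto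
  qed
  have t2: "(lam (j+1) - x) / (lam (j+1) - lam (i+1)) * B p (i+1) x \<ge> 0"
  proof (cases "x > lam (j+1)")
    case True then show ?thesis using supp_right[of "i+1" p x] pr unfolding eqs by simp
  next
    case False
    have "lam (i+1) \<le> lam (j+1)" using pr by (intro mono) (auto simp: j_def)
    moreover have "B p (i+1) x \<ge> 0" using Suc.IH[of "i+1"] pr unfolding eqs by auto
    ultimately show ?thesis using False by (intro mult_nonneg_nonneg divide_nonneg_nonneg) auto
  qed
  show ?case using t1 t2 by (simp add: eqs)
qed

lemma degen: "lo \<le> i \<Longrightarrow> i + int p + 1 \<le> hi \<Longrightarrow> lam i = lam (i + int p + 1) \<Longrightarrow> B p i x = 0"
proof (induction p arbitrary: i)
  case 0 then show ?case by auto
next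
  case (Suc p)
  define j where "j = i + int p + 1"
  have eqs: "i + int (Suc p) + 1 = j + 1" "i + 1 + int p + 1 = j + 1" "i + int p + 2 = j + 1" "i + int p + 1 = j"
    by (simp_all add: j_def)
  have pr: "lo \<le> i" "j + 1 \<le> hi" "lam i = lam (j+1)"
    using Suc.prems unfolding eqs by auto
  have m1: "lam i \<le> lam j" "lam j \<le> lam (j+1)" "lam i \<le> lam (i+1)" "lam (i+1) \<le> lam (j+1)"
    using pr(1,2) by (auto intro!: mono simp: j_def)
  have ih1: "B p i x = 0" using Suc.IH[of i] pr m1 unfolding eqs by auto
  have ih2: "B p (i+1) x = 0" using Suc.IH[of "i+1"] pr m1 unfolding eqs by auto
  show ?case by (simp add: ih1 ih2)
qed


lemma B0_lt: "x < b \<Longrightarrow> B 0 i x = (if lam i \<le> x \<and> x < lam (i+1) then 1 else 0)"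
  by simp

lemma tele: "lo + int n \<le> hi \<Longrightarrow> (\<Sum>i\<in>{lo..<lo+int n}. if lam i \<le> x \<and> x < lam (i+1) then 1 else 0)
   = (if lam lo \<le> x \<and> x < lam (lo + int n) then 1 else (0::real))"
proof (induction n)
  case 0 then show ?case by simp
next
  case (Suc n)
  have st: "{lo..<lo + int n + 1} = insert (lo + int n) {lo..<lo + int n}" by auto
  have m1: "lam lo \<le> lam (lo + int n)" using Suc.prems by (intro mono) auto
  have m2: "lam (lo + int n) \<le> lam (lo + int n + 1)" using Suc.prems by (intro mono) auto
  have ih: "(\<Sum>i\<in>{lo..<lo+int n}. if lam i \<le> x \<and> x < lam (i+1) then 1 else 0)
   = (if lam lo \<le> x \<and> x < lam (lo + int n) then 1 else (0::real))" using Suc by simp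
  have e: "lo + int (Suc n) = lo + int n + 1" by simp
  show ?case unfolding e st using ih m1 m2 by (subst sum.insert) auto
qed

lemma B0_b: "lo \<le> i \<Longrightarrow> i + 1 \<le> hi \<Longrightarrow> B 0 i b = (if i = int g then 1 else 0)"
proof -
  assume h: "lo \<le> i" "i + 1 \<le> hi"
  have lb: "lam (i+1) \<le> b" using lam_range[of "i+1"] h by simp
  show ?thesis
  proof (cases "i = int g")
    case True
    then have "lam i < lam (i+1)" "lam (i+1) = b" using lam_strict1[of i] lam_b[of "i+1"] by auto
    then show ?thesis using True by simp
  next
    case False
    show ?thesis
    proof (cases "i < int g")
      case True
      have "lam (i+1) \<le> lam (int g)" using True h by (intro mono) auto
      moreover have "lam (int g) < lam (int g + 1)" using lam_strict1 by simp
      moreover have "lam (int g + 1) = b" using lam_b by simp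
      ultimately show ?thesis using False lb by auto
    next
      case F2: False
      then have "lam i = b" "lam (i+1) = b" using False h lam_b[of i] lam_b[of "i+1"] by auto
      then show ?thesis using False by simp
    qed
  qed
qed

lemma pou0: "x \<in> {a..b} \<Longrightarrow> (\<Sum>i\<in>{lo..hi - 1}. B 0 i x) = 1"
proof -
  assume x: "x \<in> {a..b}"
  show ?thesis
  proof (cases "x = b")
    case True
    have "(\<Sum>i\<in>{lo..hi - 1}. B 0 i x) = (\<Sum>i\<in>{lo..hi - 1}. if i = int g then 1 else 0)"
      using True by (intro sum.cong) (auto simp: B0_b simp del: bspline.simps)
    also have "\<dots> = 1" by (subst sum.delta) auto
    finally show ?thesis .
  next
    case False
    then have xb: "x < b" using x by simp
    have "(\<Sum>i\<in>{lo..hi - 1}. B 0 i x) = (\<Sum>i\<in>{lo..<lo + int (g + 2*k + 1)}. if lam i \<le> x \<and> x < lam (i+1) then 1 else 0)"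
      using xb by (intro sum.cong) auto
    also have "\<dots> = (if lam lo \<le> x \<and> x < lam (lo + int (g + 2*k + 1)) then 1 else (0::real))"
      by (rule tele) simp
    also have "\<dots> = 1"
    proof -
      have eh: "lo + int (g + 2*k + 1) = hi" by simp
      show ?thesis unfolding eh using lam_a[of lo] lam_b[of hi] x xb by simp
    qed
    finally show ?thesis .
  qed
qed

lemma pou: "p \<le> k \<Longrightarrow> x \<in> {a..b} \<Longrightarrow> (\<Sum>i\<in>{lo..hi - int p - 1}. B p i x) = 1"
proof (induction p)
  case 0 then show ?case using pou0 by simp
next
  case (Suc p)
  define N where "N = hi - int p - 2"
  define w where "w i = (x - lam i) / (lam (i + int p + 1) - lam i)" for i
  define v where "v i = (lam (i + int p + 1) - x) / (lam (i + int p + 1) - lam i)" for i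
  have IH: "(\<Sum>i\<in>{lo..N+1}. B p i x) = 1" using Suc by (simp add: N_def)
  have eN: "hi - int (Suc p) - 1 = N" by (simp add: N_def)
  have NN: "lo \<le> N" using Suc.prems by (simp add: N_def)
  have bl: "B p lo x = 0" using Suc.prems lam_a[of lo] lam_a[of "lo + int p + 1"] by (intro degen) auto
  have br: "B p (N+1) x = 0" using Suc.prems lam_b[of "N+1"] lam_b[of "N + 1 + int p + 1"]
    by (intro degen) (auto simp: N_def)
  have wv: "w i * B p i x + v i * B p i x = B p i x" if "lo \<le> i" "i \<le> N + 1" for i
  proof (cases "lam (i + int p + 1) - lam i = 0")
    case True
    then have "B p i x = 0" using that by (intro degen) (auto simp: N_def)
    then show ?thesis by simp
  next
    case False
    have "w i + v i = (lam (i + int p + 1) - lam i) / (lam (i + int p + 1) - lam i)"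
      unfolding w_def v_def by (simp add: add_divide_distrib[symmetric])
    then have "w i + v i = 1" using False by simp
    then show ?thesis by (simp add: distrib_right[symmetric])
  qed
  have "(\<Sum>i\<in>{lo..N}. B (Suc p) i x) = (\<Sum>i\<in>{lo..N}. w i * B p i x) + (\<Sum>i\<in>{lo..N}. v (i+1) * B p (i+1) x)"
    unfolding w_def v_def by (simp add: sum.distrib add_ac)
  also have "(\<Sum>i\<in>{lo..N}. v (i+1) * B p (i+1) x) = (\<Sum>i\<in>{lo+1..N+1}. v i * B p i x)"
    by (rule sum_Icc_shift)
  also have "\<dots> = (\<Sum>i\<in>{lo..N+1}. v i * B p i x)"
    using NN bl by (subst sum_Icc_bot[of lo "N+1"]) auto
  also have "(\<Sum>i\<in>{lo..N}. w i * B p i x) = (\<Sum>i\<in>{lo..N+1}. w i * B p i x)"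
    using NN br by (subst sum_Icc_top) auto
  also have "(\<Sum>i\<in>{lo..N+1}. w i * B p i x) + (\<Sum>i\<in>{lo..N+1}. v i * B p i x) = (\<Sum>i\<in>{lo..N+1}. B p i x)"
    by (subst sum.distrib[symmetric]) (intro sum.cong; auto intro!: wv)
  finally show ?case using IH eN by simp
qed


lemma t1_nn: "lo \<le> i \<Longrightarrow> i + int p + 1 \<le> hi \<Longrightarrow> (x - lam i) / (lam (i + int p + 1) - lam i) * B p i x \<ge> 0"
proof (cases "x < lam i")
  case True
  assume "lo \<le> i" "i + int p + 1 \<le> hi"
  then show ?thesis using supp_left[of i p x] True by simp
next
  case False
  assume h: "lo \<le> i" "i + int p + 1 \<le> hi"
  have "lam i \<le> lam (i + int p + 1)" using h by (intro mono) auto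
  then show ?thesis using False nonneg[OF h] by (intro mult_nonneg_nonneg divide_nonneg_nonneg) auto
qed

lemma t2_nn: "lo \<le> i \<Longrightarrow> i + int p + 2 \<le> hi \<Longrightarrow> (lam (i + int p + 2) - x) / (lam (i + int p + 2) - lam (i+1)) * B p (i+1) x \<ge> 0"
proof (cases "x > lam (i + int p + 2)")
  case True
  assume h: "lo \<le> i" "i + int p + 2 \<le> hi"
  have e: "i + 1 + int p + 1 = i + int p + 2" by simp
  have "B p (i+1) x = 0" using h True by (intro supp_right) (auto simp only: e)
  then show ?thesis by simp
next
  case False
  assume h: "lo \<le> i" "i + int p + 2 \<le> hi"
  have "lam (i+1) \<le> lam (i + int p + 2)" using h by (intro mono) auto
  moreover have "B p (i+1) x \<ge> 0" using h by (intro nonneg) auto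
  ultimately show ?thesis using False by (intro mult_nonneg_nonneg divide_nonneg_nonneg) auto
qed

lemma Bsuc: "B (Suc p) i x = (x - lam i) / (lam (i + int p + 1) - lam i) * B p i x
   + (lam (i + int p + 2) - x) / (lam (i + int p + 2) - lam (i+1)) * B p (i+1) x"
  by simp

lemma pos: "lo \<le> i \<Longrightarrow> i + int p + 1 \<le> hi \<Longrightarrow> i \<le> j \<Longrightarrow> j \<le> i + int p \<Longrightarrow> lam j < x \<Longrightarrow> x < lam (j+1) \<Longrightarrow> B p i x > 0"
proof (induction p arbitrary: i)
  case 0 then show ?case by auto
next
  case (Suc p)
  have r: "i + int p + 2 \<le> hi" using Suc.prems by simp
  have n1: "(x - lam i) / (lam (i + int p + 1) - lam i) * B p i x \<ge> 0"
    using Suc.prems r by (intro t1_nn) auto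
  have n2: "(lam (i + int p + 2) - x) / (lam (i + int p + 2) - lam (i+1)) * B p (i+1) x \<ge> 0"
    using Suc.prems r by (intro t2_nn) auto
  show ?case
  proof (cases "j \<le> i + int p")
    case True
    have m: "lam i \<le> lam j" "lam (j+1) \<le> lam (i + int p + 1)" using Suc.prems True by (auto intro!: mono)
    have "B p i x > 0" using Suc.prems True by (intro Suc.IH) auto
    moreover have "lam (i + int p + 1) - lam i > 0" "x - lam i > 0" using m Suc.prems by auto
    ultimately have "(x - lam i) / (lam (i + int p + 1) - lam i) * B p i x > 0" by simp
    then show ?thesis using n2 unfolding Bsuc by linarith
  next
    case False
    then have jj: "j = i + int p + 1" using Suc.prems by simp
    have m: "lam (i+1) \<le> lam j" using Suc.prems jj by (auto intro!: mono)
    have e: "j + 1 = i + int p + 2" using jj by simp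
    have "B p (i+1) x > 0" using Suc.prems jj by (intro Suc.IH[of "i+1"]) auto
    moreover have "lam (i + int p + 2) - lam (i+1) > 0" "lam (i + int p + 2) - x > 0"
      using m Suc.prems unfolding e[symmetric] by auto
    ultimately have "(lam (i + int p + 2) - x) / (lam (i + int p + 2) - lam (i+1)) * B p (i+1) x > 0" by simp
    then show ?thesis using n1 unfolding Bsuc by linarith
  qed
qed

lemma lam_gt_a: "1 \<le> j \<Longrightarrow> j \<le> hi \<Longrightarrow> lam j > a"
proof -
  assume h: "1 \<le> j" "j \<le> hi"
  have "a = lam 0" using lam_a by simp
  also have "\<dots> < lam 1" using lam_strict1[of 0] by simp
  also have "\<dots> \<le> lam j" using h by (intro mono) auto
  finally show ?thesis .
qed

lemma ev_a: "eventually (\<lambda>x. a < x \<and> x < lam 1) (at_right a)"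
proof -
  have "lam 1 > a" using lam_gt_a by simp
  then show ?thesis using eventually_at_right_field by blast
qed


lemma lim_a: "i \<le> 0 \<Longrightarrow> lo \<le> i \<Longrightarrow> 0 \<le> i + int p \<Longrightarrow> p \<le> k \<Longrightarrow>
  \<exists>L>0. ((\<lambda>x. B p i x / (x - a) ^ nat (i + int p)) \<longlongrightarrow> L) (at_right a)"
proof (induction p arbitrary: i)
  case 0
  then have i0: "i = 0" by simp
  have "eventually (\<lambda>x. B 0 i x / (x - a) ^ nat (i + int 0) = 1) (at_right a)"
    using ev_a
  proof (rule eventually_mono)
    fix x assume "a < x \<and> x < lam 1"
    then show "B 0 i x / (x - a) ^ nat (i + int 0) = 1" using i0 lam_a[of 0] by simp
  qed
  then show ?case by (intro exI[of _ 1]) (auto intro: tendsto_eventually)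
next
  case (Suc p)
  define m where "m = nat (i + int (Suc p))"
  have r: "i + int p + 2 \<le> hi" using Suc.prems by simp
  have lai: "lam i = a" using Suc.prems lam_a by simp
  define T1 where "T1 x = (x - lam i) / (lam (i + int p + 1) - lam i) * B p i x / (x - a) ^ m" for x
  define T2 where "T2 x = (lam (i + int p + 2) - x) / (lam (i + int p + 2) - lam (i+1)) * B p (i+1) x / (x - a) ^ m" for x
  obtain A1 where A1: "A1 \<ge> 0" "0 \<le> i + int p \<Longrightarrow> A1 > 0" "(T1 \<longlongrightarrow> A1) (at_right a)"
  proof (cases "0 \<le> i + int p")
    case True
    obtain L1 where L1: "L1 > 0" "((\<lambda>x. B p i x / (x - a) ^ nat (i + int p)) \<longlongrightarrow> L1) (at_right a)"
      using Suc.IH[of i] Suc.prems True by auto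
    define D where "D = lam (i + int p + 1) - a"
    have D: "D > 0" unfolding D_def using lam_gt_a[of "i + int p + 1"] True Suc.prems by simp
    have mm: "m = Suc (nat (i + int p))" unfolding m_def using True by simp
    have "eventually (\<lambda>x. B p i x / (x - a) ^ nat (i + int p) / D = T1 x) (at_right a)"
      using ev_a
    proof (rule eventually_mono)
      fix x assume "a < x \<and> x < lam 1"
      then have t: "x - a \<noteq> 0" by simp
      have gen: "\<And>t P Bv. t \<noteq> 0 \<Longrightarrow> P \<noteq> 0 \<Longrightarrow> D \<noteq> 0 \<Longrightarrow> Bv / P / D = t / D * Bv / (t * P)"
        by (simp add: field_simps)
      show "B p i x / (x - a) ^ nat (i + int p) / D = T1 x"
        unfolding T1_def mm lai D_def[symmetric] power_Suc using t D by (intro gen) auto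
    qed
    moreover have "((\<lambda>x. B p i x / (x - a) ^ nat (i + int p) / D) \<longlongrightarrow> L1 / D) (at_right a)"
      by (intro tendsto_divide L1 tendsto_const) (use D in simp)
    ultimately have "(T1 \<longlongrightarrow> L1 / D) (at_right a)" by (auto intro: Lim_transform_eventually)
    then show ?thesis using that[of "L1 / D"] L1 D by simp
  next
    case False
    have "eventually (\<lambda>x. T1 x = 0) (at_right a)"
      using ev_a
    proof (rule eventually_mono)
      fix x assume x: "a < x \<and> x < lam 1"
      have "lam (i + int p + 1) = a" using False Suc.prems by (intro lam_a) auto
      then have "B p i x = 0" using x Suc.prems r by (intro supp_right) auto
      then show "T1 x = 0" unfolding T1_def by simp
    qed
    then have "(T1 \<longlongrightarrow> 0) (at_right a)" by (rule tendsto_eventually)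
    then show ?thesis using that[of 0] False by simp
  qed
  obtain A2 where A2: "A2 \<ge> 0" "i \<le> -1 \<Longrightarrow> A2 > 0" "(T2 \<longlongrightarrow> A2) (at_right a)"
  proof (cases "i \<le> -1")
    case True
    obtain L2 where L2: "L2 > 0" "((\<lambda>x. B p (i+1) x / (x - a) ^ nat (i + 1 + int p)) \<longlongrightarrow> L2) (at_right a)"
      using Suc.IH[of "i+1"] Suc.prems True by auto
    define c where "c = lam (i + int p + 2)"
    have c: "c > a" unfolding c_def using lam_gt_a[of "i + int p + 2"] r Suc.prems by simp
    have la1: "lam (i+1) = a" using True Suc.prems lam_a by simp
    have mm: "m = nat (i + 1 + int p)" unfolding m_def by simp
    have "eventually (\<lambda>x. (c - x) / (c - a) * (B p (i+1) x / (x - a) ^ nat (i + 1 + int p)) = T2 x) (at_right a)"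
      by (rule always_eventually) (simp add: T2_def mm la1 c_def)
    moreover have "((\<lambda>x. (c - x) / (c - a) * (B p (i+1) x / (x - a) ^ nat (i + 1 + int p))) \<longlongrightarrow> (c - a) / (c - a) * L2) (at_right a)"
      by (intro tendsto_mult L2 tendsto_divide tendsto_diff tendsto_const tendsto_ident_at) (use c in simp)
    ultimately have "(T2 \<longlongrightarrow> (c - a) / (c - a) * L2) (at_right a)" by (auto intro: Lim_transform_eventually)
    then show ?thesis using that[of L2] L2 c by simp
  next
    case False
    then have i0: "i = 0" using Suc.prems by simp
    have "eventually (\<lambda>x. T2 x = 0) (at_right a)"
      using ev_a
    proof (rule eventually_mono)
      fix x assume x: "a < x \<and> x < lam 1"
      have "B p (i+1) x = 0" using x Suc.prems r i0 by (intro supp_left) auto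
      then show "T2 x = 0" unfolding T2_def by simp
    qed
    then have "(T2 \<longlongrightarrow> 0) (at_right a)" by (rule tendsto_eventually)
    then show ?thesis using that[of 0] False by simp
  qed
  have "((\<lambda>x. T1 x + T2 x) \<longlongrightarrow> A1 + A2) (at_right a)" by (intro tendsto_add A1 A2)
  moreover have "(\<lambda>x. T1 x + T2 x) = (\<lambda>x. B (Suc p) i x / (x - a) ^ nat (i + int (Suc p)))"
    unfolding T1_def T2_def m_def Bsuc by (simp add: add_divide_distrib)
  moreover have "A1 + A2 > 0" using A1 A2 by (cases "0 \<le> i + int p") auto
  ultimately show ?case by auto
qed


lemma indep_step:
  assumes S: "\<forall>x\<in>{a..b}. (\<Sum>j\<in>{lo..int g}. c j * B k j x) = 0"
    and i: "lo \<le> i" "i \<le> int g" and prev: "\<And>j. lo \<le> j \<Longrightarrow> j < i \<Longrightarrow> c j = 0"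
  shows "c i = 0"
proof (cases "i \<le> 0")
  case True
  have "\<forall>j\<in>{i..0}. \<exists>L. L > 0 \<and> ((\<lambda>x. B k j x / (x - a) ^ nat (j + int k)) \<longlongrightarrow> L) (at_right a)"
    using i by (auto intro!: lim_a)
  then obtain Lf where Lf: "\<And>j. j \<in> {i..0} \<Longrightarrow> Lf j > 0 \<and> ((\<lambda>x. B k j x / (x - a) ^ nat (j + int k)) \<longlongrightarrow> Lf j) (at_right a)"
    by metis
  define F where "F x = (\<Sum>j\<in>{i..0}. c j * (B k j x / (x - a) ^ nat (j + int k)) * (x - a) ^ nat (j - i))" for x
  have "(F \<longlongrightarrow> (\<Sum>j\<in>{i..0}. c j * Lf j * (a - a) ^ nat (j - i))) (at_right a)"
    unfolding F_def using Lf
    by (intro tendsto_sum tendsto_mult tendsto_const tendsto_power tendsto_diff tendsto_ident_at) auto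
  moreover have "(\<Sum>j\<in>{i..0}. c j * Lf j * (a - a) ^ nat (j - i)) = (\<Sum>j\<in>{i..0}. if j = i then c i * Lf i else 0)"
    by (intro sum.cong) auto
  moreover have "\<dots> = c i * Lf i" using True by (subst sum.delta) auto
  ultimately have t1: "(F \<longlongrightarrow> c i * Lf i) (at_right a)" by simp
  have "eventually (\<lambda>x. F x = 0) (at_right a)"
    using ev_a
  proof (rule eventually_mono)
    fix x assume x: "a < x \<and> x < lam 1"
    then have xa: "x - a \<noteq> 0" by simp
    have "F x = (\<Sum>j\<in>{i..0}. c j * B k j x / (x - a) ^ nat (i + int k))"
      unfolding F_def
    proof (intro sum.cong refl)
      fix j assume j: "j \<in> {i..0}"
      have "nat (j + int k) = nat (i + int k) + nat (j - i)" using j i by auto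
      then have "(x - a) ^ nat (j + int k) = (x - a) ^ nat (i + int k) * (x - a) ^ nat (j - i)"
        by (simp add: power_add)
      then show "c j * (B k j x / (x - a) ^ nat (j + int k)) * (x - a) ^ nat (j - i) = c j * B k j x / (x - a) ^ nat (i + int k)"
        using xa by simp
    qed
    also have "\<dots> = (\<Sum>j\<in>{i..0}. c j * B k j x) / (x - a) ^ nat (i + int k)"
      by (simp add: sum_divide_distrib)
    also have "(\<Sum>j\<in>{i..0}. c j * B k j x) = (\<Sum>j\<in>{lo..int g}. c j * B k j x)"
    proof (rule sum.mono_neutral_left)
      show "{i..0} \<subseteq> {lo..int g}" using i by auto
      show "\<forall>j\<in>{lo..int g} - {i..0}. c j * B k j x = 0"
      proof
        fix j assume j: "j \<in> {lo..int g} - {i..0}"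
        show "c j * B k j x = 0"
        proof (cases "j < i")
          case True then show ?thesis using prev j by simp
        next
          case False
          then have "1 \<le> j" using j by auto
          then have "lam 1 \<le> lam j" using j by (intro mono) auto
          then have "B k j x = 0" using x j by (intro supp_left) auto
          then show ?thesis by simp
        qed
      qed
    qed simp
    also have "\<dots> = 0" using S x lam_gt_a[of 1] lam_range[of 1] by auto
    finally show "F x = 0" by simp
  qed
  then have "(F \<longlongrightarrow> 0) (at_right a)" by (rule tendsto_eventually)
  with t1 have "c i * Lf i = 0" by (intro tendsto_unique[of "at_right a" F]) auto
  then show ?thesis using Lf[of i] True by auto
next
  case False
  define x where "x = (lam i + lam (i+1)) / 2"
  have lt: "lam i < lam (i+1)" using False i by (intro lam_strict1) auto
  then have x: "lam i < x" "x < lam (i+1)" unfolding x_def by auto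
  have xab: "x \<in> {a..b}" using x lam_range[of i] lam_range[of "i+1"] i by auto
  have "(\<Sum>j\<in>{lo..int g}. c j * B k j x) = (\<Sum>j\<in>{lo..int g}. if j = i then c i * B k i x else 0)"
  proof (intro sum.cong refl)
    fix j assume j: "j \<in> {lo..int g}"
    show "c j * B k j x = (if j = i then c i * B k i x else 0)"
    proof (cases "j < i")
      case True then show ?thesis using prev j by simp
    next
      case F: False
      show ?thesis
      proof (cases "j = i")
        case False
        then have "lam (i+1) \<le> lam j" using F j i by (intro mono) auto
        then have "B k j x = 0" using x j by (intro supp_left) auto
        then show ?thesis using False by simp
      qed simp
    qed
  qed
  also have "\<dots> = c i * B k i x" using i by (subst sum.delta) auto
  finally have "c i * B k i x = 0" using S xab by simp
  moreover have "B k i x > 0" using i x by (intro pos[of i k i]) auto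
  ultimately show ?thesis by simp
qed

lemma indep:
  assumes S: "\<forall>x\<in>{a..b}. (\<Sum>j\<in>{lo..int g}. c j * B k j x) = 0"
  shows "\<forall>i\<in>{lo..int g}. c i = 0"
proof -
  have "\<forall>i. lo \<le> i \<and> i \<le> int g \<and> i - lo = int n \<longrightarrow> c i = 0" for n
  proof (induction n rule: less_induct)
    case (less n)
    show ?case
    proof (intro allI impI)
      fix i assume i: "lo \<le> i \<and> i \<le> int g \<and> i - lo = int n"
      show "c i = 0"
      proof (rule indep_step[OF S])
        fix j assume j: "lo \<le> j" "j < i"
        show "c j = 0" using less[of "nat (j - lo)"] i j by auto
      qed (use i in auto)
    qed
  qed
  then show ?thesis by (metis atLeastAtMost_iff diff_ge_0_iff_ge nonneg_int_cases)
qed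


lemma deriv: "lo \<le> i \<Longrightarrow> i + int p + 2 \<le> hi \<Longrightarrow> x \<notin> lam ` {lo..hi} \<Longrightarrow> x \<noteq> b \<Longrightarrow>
  (B (Suc p) i has_real_derivative zbspline lam b p i x) (at x)"
proof (induction p arbitrary: i)
  case 0
  have ne: "x \<noteq> lam i" "x \<noteq> lam (i+1)" "x \<noteq> lam (i+1+1)" using 0 by (auto simp: image_iff)
  have d0: "(B 0 i has_real_derivative 0) (at x)" using ne 0 by (intro B0_deriv) auto
  have d1: "(B 0 (i+1) has_real_derivative 0) (at x)" using ne 0 by (intro B0_deriv) auto
  have f: "B (Suc 0) i = (\<lambda>y. (y - lam i) / (lam (i + int 0 + 1) - lam i) * B 0 i y
     + (lam (i + int 0 + 2) - y) / (lam (i + int 0 + 2) - lam (i+1)) * B 0 (i+1) y)"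
    by (rule ext) (rule Bsuc)
  have "zbspline lam b 0 i x = 1 / (lam (i + int 0 + 1) - lam i) * B 0 i x + (x - lam i) / (lam (i + int 0 + 1) - lam i) * 0
     + - 1 / (lam (i + int 0 + 2) - lam (i+1)) * B 0 (i+1) x + (lam (i + int 0 + 2) - x) / (lam (i + int 0 + 2) - lam (i+1)) * 0"
    by (simp add: zbspline_def)
  then show ?case unfolding f by (simp only:) (rule comb[OF d0 d1])
next
  case (Suc p)
  have d0: "(B (Suc p) i has_real_derivative zbspline lam b p i x) (at x)"
    using Suc by (intro Suc.IH) auto
  have d1: "(B (Suc p) (i+1) has_real_derivative zbspline lam b p (i+1) x) (at x)"
    using Suc by (intro Suc.IH) auto
  have f: "B (Suc (Suc p)) i = (\<lambda>y. (y - lam i) / (lam (i + int (Suc p) + 1) - lam i) * B (Suc p) i y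
     + (lam (i + int (Suc p) + 2) - y) / (lam (i + int (Suc p) + 2) - lam (i+1)) * B (Suc p) (i+1) y)"
    by (rule ext) (rule Bsuc)
  have eqs: "i + int (Suc p) + 1 = i + int p + 2" "i + int (Suc p) + 2 = i + int p + 3"
    "i + 1 + int p + 1 = i + int p + 2" "i + 1 + int p + 2 = i + int p + 3" "i + 1 + 1 = i + 2"
    "real (Suc p + 1) = real (p + 1) + 1" by simp_all
  have m: "lam i \<le> lam (i+1)" "lam (i+1) \<le> lam (i + int p + 2)" "lam (i + int p + 2) \<le> lam (i + int p + 3)"
    using Suc.prems by (auto intro!: mono)
  have "zbspline lam b (Suc p) i x = 1 / (lam (i + int (Suc p) + 1) - lam i) * B (Suc p) i x
     + (x - lam i) / (lam (i + int (Suc p) + 1) - lam i) * zbspline lam b p i x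
     + - 1 / (lam (i + int (Suc p) + 2) - lam (i+1)) * B (Suc p) (i+1) x
     + (lam (i + int (Suc p) + 2) - x) / (lam (i + int (Suc p) + 2) - lam (i+1)) * zbspline lam b p (i+1) x"
    unfolding zbspline_def Bsuc eqs by (rule alg[OF m, symmetric])
  then show ?case unfolding f by (simp only:) (rule comb[OF d0 d1])
qed


lemma eq_knot: "lo \<le> j \<Longrightarrow> j + 1 \<le> hi \<Longrightarrow> lam j = lam (j+1) \<Longrightarrow> lam j = a \<or> lam j = b"
proof -
  assume h: "lo \<le> j" "j + 1 \<le> hi" "lam j = lam (j+1)"
  show ?thesis
  proof (cases "j < 0")
    case True then show ?thesis using lam_a[of j] h by simp
  next
    case False
    show ?thesis
    proof (cases "j \<le> int g")
      case True then show ?thesis using lam_strict1[of j] False h by simp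
    next
      case F2: False then show ?thesis using lam_b[of j] h by simp
    qed
  qed
qed

lemma B1: "B (Suc 0) i y = (y - lam i) / (lam (i+1) - lam i) * B 0 i y + (lam (i+2) - y) / (lam (i+2) - lam (i+1)) * B 0 (i+1) y"
  by simp

lemma cont1: assumes i: "lo \<le> i" "i + 2 \<le> hi" shows "continuous_on {a..b} (B (Suc 0) i)"
proof -
  define t0 where "t0 = lam i"
  define t1 where "t1 = lam (i+1)"
  define t2 where "t2 = lam (i+2)"
  have m: "t0 \<le> t1" "t1 \<le> t2" unfolding t0_def t1_def t2_def using i by (auto intro!: mono)
  have r: "a \<le> t0" "t2 \<le> b" unfolding t0_def t2_def using i lam_range[of i] lam_range[of "i+2"] by auto
  have B0i: "B 0 i y = (if t0 \<le> y \<and> (y < t1 \<or> (y = b \<and> t1 = b \<and> t0 < t1)) then 1 else 0)" for y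
    unfolding t0_def t1_def by simp
  have B0i1: "B 0 (i+1) y = (if t1 \<le> y \<and> (y < t2 \<or> (y = b \<and> t2 = b \<and> t1 < t2)) then 1 else 0)" for y
    unfolding t1_def t2_def by (simp add: add.assoc)
  have Bf: "B (Suc 0) i y = (y - t0) / (t1 - t0) * B 0 i y + (t2 - y) / (t2 - t1) * B 0 (i+1) y" for y
    unfolding t0_def t1_def t2_def by (rule B1)
  show ?thesis
  proof (cases "t0 < t1")
    case T1: True
    show ?thesis
    proof (cases "t1 < t2")
      case T2: True
      have "B (Suc 0) i y = max 0 (min ((y - t0) / (t1 - t0)) ((t2 - y) / (t2 - t1)))" if y: "y \<in> {a..b}" for y
      proof -
        have e0: "t1 - t0 > 0" and e1: "t2 - t1 > 0" using T1 T2 by auto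
        show ?thesis
        proof (cases "y < t0")
          case True
          have "(y - t0) / (t1 - t0) < 0" using True e0 by (simp add: divide_neg_pos)
          then show ?thesis unfolding Bf B0i B0i1 using True m by auto
        next
          case F0: False
          show ?thesis
          proof (cases "y < t1")
            case True
            have u: "(y - t0) / (t1 - t0) \<ge> 0" "(y - t0) / (t1 - t0) \<le> 1" using F0 True e0 by auto
            have v: "(t2 - y) / (t2 - t1) \<ge> 1" using True e1 by (simp add: le_divide_eq)
            have "B (Suc 0) i y = (y - t0) / (t1 - t0)" unfolding Bf B0i B0i1 using True F0 by auto
            moreover have "min ((y - t0) / (t1 - t0)) ((t2 - y) / (t2 - t1)) = (y - t0) / (t1 - t0)"
              using u v by (intro min.absorb1) linarith
            ultimately show ?thesis using u by simp
          next
            case F1: False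
            show ?thesis
            proof (cases "y < t2")
              case True
              have u: "(y - t0) / (t1 - t0) \<ge> 1" using F1 e0 by (simp add: le_divide_eq)
              have v: "(t2 - y) / (t2 - t1) \<ge> 0" "(t2 - y) / (t2 - t1) \<le> 1" using F1 True e1 by auto
              have "B (Suc 0) i y = (t2 - y) / (t2 - t1)" unfolding Bf B0i B0i1 using True F1 T1 r by auto
              moreover have "min ((y - t0) / (t1 - t0)) ((t2 - y) / (t2 - t1)) = (t2 - y) / (t2 - t1)"
                using u v by (intro min.absorb2) linarith
              ultimately show ?thesis using v by simp
            next
              case False
              have v: "(t2 - y) / (t2 - t1) \<le> 0" using False e1 by (simp add: divide_nonpos_pos)
              have "B 0 i y = 0" unfolding B0i using False T2 F1 by auto
              moreover have "(t2 - y) * B 0 (i+1) y = 0" unfolding B0i1 using False y r by auto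
              ultimately show ?thesis unfolding Bf using v by auto
            qed
          qed
        qed
      qed
      moreover have "continuous_on {a..b} (\<lambda>y. max 0 (min ((y - t0) / (t1 - t0)) ((t2 - y) / (t2 - t1))))"
        unfolding divide_inverse by (intro continuous_intros)
      ultimately show ?thesis using continuous_on_cong by (metis (no_types, lifting))
    next
      case False
      then have t12: "t1 = t2" using m by simp
      have "t1 = a \<or> t1 = b" using eq_knot[of "i+1"] i t12 unfolding t1_def t2_def by (simp add: add.assoc)
      then have t1b: "t1 = b" using T1 r by auto
      have "B (Suc 0) i y = max 0 ((y - t0) / (t1 - t0))" if y: "y \<in> {a..b}" for y
      proof -
        have e0: "t1 - t0 > 0" using T1 by auto
        show ?thesis
        proof (cases "y < t0")
          case True
          have "(y - t0) / (t1 - t0) < 0" using True e0 by (simp add: divide_neg_pos)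
          then show ?thesis unfolding Bf B0i t12 using True by auto
        next
          case False
          have "(y - t0) / (t1 - t0) \<ge> 0" using False e0 by auto
          then show ?thesis unfolding Bf B0i using False y t1b t12 T1 by auto
        qed
      qed
      moreover have "continuous_on {a..b} (\<lambda>y. max 0 ((y - t0) / (t1 - t0)))"
        unfolding divide_inverse by (intro continuous_intros)
      ultimately show ?thesis using continuous_on_cong by (metis (no_types, lifting))
    qed
  next
    case False
    then have t01: "t0 = t1" using m by simp
    have B0z: "B 0 i y = 0" for y unfolding B0i using t01 by auto
    show ?thesis
    proof (cases "t1 < t2")
      case T2: True
      have "t0 = a \<or> t0 = b" using eq_knot[of i] i t01 unfolding t0_def t1_def by simp
      then have t1a: "t1 = a" using T2 r t01 by auto
      have "B (Suc 0) i y = max 0 ((t2 - y) / (t2 - t1))" if y: "y \<in> {a..b}" for y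
      proof -
        have e1: "t2 - t1 > 0" using T2 by auto
        show ?thesis
        proof (cases "y < t2")
          case True
          have "(t2 - y) / (t2 - t1) \<ge> 0" using True e1 by auto
          then show ?thesis unfolding Bf B0z B0i1 using True y t1a by auto
        next
          case False
          have v: "(t2 - y) / (t2 - t1) \<le> 0" using False e1 by (simp add: divide_nonpos_pos)
          moreover have "(t2 - y) * B 0 (i+1) y = 0" unfolding B0i1 using False y r by auto
          ultimately show ?thesis unfolding Bf B0z using v by auto
        qed
      qed
      moreover have "continuous_on {a..b} (\<lambda>y. max 0 ((t2 - y) / (t2 - t1)))"
        unfolding divide_inverse by (intro continuous_intros)
      ultimately show ?thesis using continuous_on_cong by (metis (no_types, lifting))
    next
      case False
      then have "t1 = t2" using m by simp
      then have "B (Suc 0) i y = 0" for y unfolding Bf B0z by simp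
      then show ?thesis by simp
    qed
  qed
qed

lemma cont: "lo \<le> i \<Longrightarrow> i + int p + 2 \<le> hi \<Longrightarrow> continuous_on {a..b} (B (Suc p) i)"
proof (induction p arbitrary: i)
  case 0 then show ?case using cont1 by simp
next
  case (Suc p)
  have c0: "continuous_on {a..b} (B (Suc p) i)" using Suc by (intro Suc.IH) auto
  have c1: "continuous_on {a..b} (B (Suc p) (i+1))" using Suc by (intro Suc.IH) auto
  have f: "B (Suc (Suc p)) i = (\<lambda>y. (y - lam i) / (lam (i + int (Suc p) + 1) - lam i) * B (Suc p) i y
     + (lam (i + int (Suc p) + 2) - y) / (lam (i + int (Suc p) + 2) - lam (i+1)) * B (Suc p) (i+1) y)"
    by (rule ext) (rule Bsuc)
  show ?case unfolding f divide_inverse by (intro continuous_intros c0 c1)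
qed


lemma B_at_b: "lo \<le> i \<Longrightarrow> i \<le> int g - 1 \<Longrightarrow> i + int p + 1 \<le> hi \<Longrightarrow> B p i b = 0"
proof (induction p arbitrary: i)
  case 0
  have "lam (i+1) \<le> lam (int g)" using 0 by (intro mono) auto
  moreover have "lam (int g) < b" using lam_strict1[of "int g"] lam_b[of "int g + 1"] by simp
  ultimately show ?case by simp
next
  case (Suc p)
  have ih1: "B p i b = 0" using Suc by (intro Suc.IH) auto
  have "(lam (i + int p + 2) - b) / (lam (i + int p + 2) - lam (i+1)) * B p (i+1) b = 0"
  proof (cases "i + 1 \<le> int g - 1")
    case True
    then have "B p (i+1) b = 0" using Suc by (intro Suc.IH) auto
    then show ?thesis by simp
  next
    case False
    then have "lam (i + int p + 2) = b" using Suc.prems by (intro lam_b) auto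
    then show ?thesis by simp
  qed
  then show ?case using ih1 unfolding Bsuc by simp
qed

lemma B_at_left: "lo \<le> i \<Longrightarrow> i + int p + 1 \<le> hi \<Longrightarrow> x \<le> lam i \<Longrightarrow> lam i < lam (i + int p) \<Longrightarrow> B p i x = 0"
proof (induction p arbitrary: i)
  case 0 then show ?case by simp
next
  case (Suc p)
  have t1: "(x - lam i) / (lam (i + int p + 1) - lam i) * B p i x = 0"
  proof (cases "x < lam i")
    case True
    then have "B p i x = 0" using Suc.prems by (intro supp_left) auto
    then show ?thesis by simp
  qed (use Suc.prems in simp)
  have m: "lam i \<le> lam (i+1)" using Suc.prems by (intro mono) auto
  have "B p (i+1) x = 0"
  proof (cases "x < lam (i+1)")
    case True
    then show ?thesis using Suc.prems by (intro supp_left) auto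
  next
    case False
    then have eq: "lam (i+1) = lam i" "x = lam i" using m Suc.prems by auto
    have e: "i + int (Suc p) = i + 1 + int p" by simp
    have "lam (i+1) < lam (i + 1 + int p)" using Suc.prems(4) eq unfolding e by simp
    then show ?thesis using Suc.prems eq by (intro Suc.IH) auto
  qed
  then show ?case using t1 unfolding Bsuc by simp
qed

lemma zb_int: "lo \<le> i \<Longrightarrow> i \<le> int g - 1 \<Longrightarrow> (zbspline lam b k i has_integral 0) {a..b}"
proof -
  assume i: "lo \<le> i" "i \<le> int g - 1"
  have "(zbspline lam b k i has_integral (B (Suc k) i b - B (Suc k) i a)) {a..b}"
  proof (rule fundamental_theorem_of_calculus_interior_strong[of "lam ` {lo..hi}"])
    show "finite (lam ` {lo..hi})" by simp
    show "a \<le> b" using ab by simp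
    show "continuous_on {a..b} (B (Suc k) i)" using i by (intro cont) auto
    fix x assume x: "x \<in> {a<..<b} - lam ` {lo..hi}"
    have "(B (Suc k) i has_real_derivative zbspline lam b k i x) (at x)"
      using i x by (intro deriv) auto
    then show "(B (Suc k) i has_vector_derivative zbspline lam b k i x) (at x)"
      by (simp add: has_real_derivative_iff_has_vector_derivative)
  qed
  moreover have "B (Suc k) i b = 0" using i by (intro B_at_b) auto
  moreover have "B (Suc k) i a = 0"
  proof (rule B_at_left)
    show "a \<le> lam i" using lam_range[of i] i by simp
    have e: "i + int (Suc k) = i + int k + 1" by simp
    show "lam i < lam (i + int (Suc k))" unfolding e using lam_len_pos[of i] i by simp
  qed (use i in auto)
  ultimately show ?thesis by simp
qed


abbreviation "J \<equiv> {lo..int g - 1}"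

definition inspan :: "(real \<Rightarrow> real) \<Rightarrow> bool" where
  "inspan f \<longleftrightarrow> (\<exists>\<alpha> \<beta>. \<forall>x\<in>{a..b}. f x = \<alpha> + (\<Sum>j\<in>J. \<beta> j * zbspline lam b k j x))"

lemma insp_const: "inspan (\<lambda>x. r)"
  unfolding inspan_def by (intro exI[of _ r] exI[of _ "\<lambda>_. 0"]) simp

lemma insp_Z: "j \<in> J \<Longrightarrow> inspan (zbspline lam b k j)"
proof -
  assume j: "j \<in> J"
  have "(\<Sum>j'\<in>J. (if j' = j then 1 else 0) * zbspline lam b k j' x) = (\<Sum>j'\<in>J. if j' = j then zbspline lam b k j' x else 0)" for x
    by (intro sum.cong) auto
  also have "\<dots> x = zbspline lam b k j x" for x using j by (subst sum.delta) auto
  finally show ?thesis unfolding inspan_def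
    by (intro exI[of _ 0] exI[of _ "\<lambda>j'. if j' = j then 1 else 0"]) simp
qed

lemma insp_add: "inspan f \<Longrightarrow> inspan h \<Longrightarrow> inspan (\<lambda>x. f x + h x)"
proof -
  assume "inspan f" "inspan h"
  then obtain a1 b1 a2 b2 where "\<forall>x\<in>{a..b}. f x = a1 + (\<Sum>j\<in>J. b1 j * zbspline lam b k j x)"
    "\<forall>x\<in>{a..b}. h x = a2 + (\<Sum>j\<in>J. b2 j * zbspline lam b k j x)" unfolding inspan_def by blast
  then show ?thesis unfolding inspan_def
    by (intro exI[of _ "a1 + a2"] exI[of _ "\<lambda>j. b1 j + b2 j"]) (simp add: distrib_right sum.distrib)
qed

lemma insp_scale: "inspan f \<Longrightarrow> inspan (\<lambda>x. r * f x)"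
proof -
  assume "inspan f"
  then obtain a1 b1 where "\<forall>x\<in>{a..b}. f x = a1 + (\<Sum>j\<in>J. b1 j * zbspline lam b k j x)"
    unfolding inspan_def by blast
  then show ?thesis unfolding inspan_def
    by (intro exI[of _ "r * a1"] exI[of _ "\<lambda>j. r * b1 j"]) (simp add: distrib_left sum_distrib_left mult.assoc)
qed

lemma insp_eq: "inspan f \<Longrightarrow> (\<And>x. x \<in> {a..b} \<Longrightarrow> f x = h x) \<Longrightarrow> inspan h"
  unfolding inspan_def by metis

lemma insp_sum: "finite S \<Longrightarrow> (\<And>i. i \<in> S \<Longrightarrow> inspan (f i)) \<Longrightarrow> inspan (\<lambda>x. \<Sum>i\<in>S. f i x)"
proof (induction S rule: finite_induct)
  case empty then show ?case using insp_const[of 0] by simp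
next
  case (insert i S)
  have "inspan (\<lambda>x. f i x + (\<Sum>i\<in>S. f i x))" using insert by (intro insp_add) auto
  then show ?case using insert by simp
qed

definition phi :: "int \<Rightarrow> real \<Rightarrow> real" where
  "phi i x = real (k+1) * B k i x / (lam (i + int k + 1) - lam i)"

lemma Zphi: "zbspline lam b k j x = phi j x - phi (j+1) x"
proof -
  have e: "j + 1 + int k + 1 = j + int k + 2" by simp
  show ?thesis unfolding zbspline_def phi_def e by (simp add: right_diff_distrib)
qed

lemma insp_diff: "i \<in> {lo..int g} \<Longrightarrow> inspan (\<lambda>x. phi i x - phi (int g) x)"
proof -
  assume i: "i \<in> {lo..int g}"
  have "inspan (\<lambda>x. \<Sum>j\<in>{i..int g - 1}. zbspline lam b k j x)"
    using i by (intro insp_sum insp_Z) auto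
  moreover have "(\<Sum>j\<in>{i..int g - 1}. zbspline lam b k j x) = phi i x - phi (int g) x" for x
    unfolding Zphi using i by (subst sum_tele_int) auto
  ultimately show ?thesis by simp
qed

lemma insp_B: "i \<in> {lo..int g} \<Longrightarrow> inspan (B k i)"
proof -
  assume i: "i \<in> {lo..int g}"
  define c where "c = real (k+1)"
  define l where "l j = lam (j + int k + 1) - lam j" for j
  define L where "L = (\<Sum>j\<in>{lo..int g}. l j / c)"
  have lpos: "l j > 0" if "j \<in> {lo..int g}" for j using lam_len_pos that unfolding l_def by auto
  have c: "c > 0" unfolding c_def by simp
  have Bphi: "B k j x = l j / c * phi j x" if "j \<in> {lo..int g}" for j x
    using lpos[OF that] c unfolding phi_def l_def c_def by simp
  have L: "L > 0" unfolding L_def using lpos c by (intro sum_pos) auto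
  have "inspan (\<lambda>x. (1 / L) * 1 + (- 1 / L) * (\<Sum>j\<in>{lo..int g}. l j / c * (phi j x - phi (int g) x)))"
    by (intro insp_add insp_scale insp_const insp_sum insp_diff) auto
  moreover have "(1 / L) * 1 + (- 1 / L) * (\<Sum>j\<in>{lo..int g}. l j / c * (phi j x - phi (int g) x)) = phi (int g) x"
    if x: "x \<in> {a..b}" for x
  proof -
    have "1 = (\<Sum>j\<in>{lo..int g}. B k j x)" using pou[of k x] x by simp
    also have "\<dots> = (\<Sum>j\<in>{lo..int g}. l j / c * (phi j x - phi (int g) x)) + L * phi (int g) x"
      unfolding L_def sum_distrib_right sum.distrib[symmetric]
      by (intro sum.cong refl) (simp add: Bphi algebra_simps)
    finally show ?thesis using L by (simp add: field_simps)
  qed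
  ultimately have pg: "inspan (phi (int g))" by (rule insp_eq)
  have "inspan (\<lambda>x. l i / c * ((phi i x - phi (int g) x) + phi (int g) x))"
    using i pg by (intro insp_scale insp_add insp_diff) auto
  then show ?thesis by (rule insp_eq) (simp add: Bphi[OF i])
qed


lemma indep_Z:
  assumes A: "\<forall>x\<in>{a..b}. \<alpha> + (\<Sum>j\<in>J. \<beta> j * zbspline lam b k j x) = 0"
  shows "\<alpha> = 0 \<and> (\<forall>j\<in>J. \<beta> j = 0)"
proof -
  have ci: "((\<lambda>x. \<alpha>) has_integral (b - a) * \<alpha>) {a..b}"
    using has_integral_const_real[of \<alpha> a b] ab by simp
  have "((\<lambda>x. \<alpha> + (\<Sum>j\<in>J. \<beta> j * zbspline lam b k j x)) has_integral
      ((b - a) * \<alpha> + (\<Sum>j\<in>J. \<beta> j * 0))) {a..b}"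
    by (intro has_integral_add ci has_integral_sum has_integral_mult_right zb_int) auto
  then have "((\<lambda>x. 0) has_integral ((b - a) * \<alpha> + (\<Sum>j\<in>J. \<beta> j * 0))) {a..b}"
    by (rule has_integral_eq[rotated]) (use A in auto)
  then have "(b - a) * \<alpha> + (\<Sum>j\<in>J. \<beta> j * 0) = 0"
    using has_integral_0 has_integral_unique by blast
  then have a0: "\<alpha> = 0" using ab by simp
  define bt where "bt i = (if i \<in> J then \<beta> i else 0)" for i
  define c where "c = real (k+1)"
  define l where "l j = lam (j + int k + 1) - lam j" for j
  have lpos: "l j > 0" if "j \<in> {lo..int g}" for j using lam_len_pos that unfolding l_def by auto
  have c: "c > 0" unfolding c_def by simp
  have S: "\<forall>x\<in>{a..b}. (\<Sum>i\<in>{lo..int g}. ((bt i - bt (i-1)) * c / l i) * B k i x) = 0"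
  proof
    fix x assume x: "x \<in> {a..b}"
    have "0 = (\<Sum>j\<in>J. \<beta> j * zbspline lam b k j x)" using A x a0 by simp
    also have "\<dots> = (\<Sum>j\<in>J. bt j * phi j x) - (\<Sum>j\<in>J. bt j * phi (j+1) x)"
      unfolding Zphi bt_def sum_subtractf[symmetric] by (intro sum.cong) (auto simp: algebra_simps)
    also have "(\<Sum>j\<in>J. bt j * phi j x) = (\<Sum>j\<in>{lo..int g - 1 + 1}. bt j * phi j x)"
      by (subst sum_Icc_top) (auto simp: bt_def)
    also have "(\<Sum>j\<in>J. bt j * phi (j+1) x) = (\<Sum>j\<in>J. bt (j + 1 - 1) * phi (j+1) x)" by simp
    also have "\<dots> = (\<Sum>i\<in>{lo+1..int g - 1 + 1}. bt (i - 1) * phi i x)"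
      by (rule sum_Icc_shift)
    also have "\<dots> = (\<Sum>i\<in>{lo..int g - 1 + 1}. bt (i - 1) * phi i x)"
      by (subst sum_Icc_bot[of lo]) (auto simp: bt_def)
    finally have "(\<Sum>i\<in>{lo..int g}. (bt i - bt (i-1)) * phi i x) = 0"
      by (simp add: sum_subtractf left_diff_distrib)
    moreover have "(bt i - bt (i-1)) * phi i x = ((bt i - bt (i-1)) * c / l i) * B k i x" for i
      unfolding phi_def c_def l_def by simp
    ultimately show "(\<Sum>i\<in>{lo..int g}. ((bt i - bt (i-1)) * c / l i) * B k i x) = 0" by simp
  qed
  have "\<forall>i\<in>{lo..int g}. (bt i - bt (i-1)) * c / l i = 0"
    using indep[OF S] by simp
  then have st: "bt i = bt (i-1)" if "i \<in> {lo..int g}" for i using that lpos[OF that] c by auto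
  have "\<forall>i. i = lo + int n \<and> i \<le> int g \<longrightarrow> bt i = 0" for n
  proof (induction n)
    case 0 then show ?case using st[of lo] by (auto simp: bt_def)
  next
    case (Suc n)
    show ?case
    proof (intro allI impI)
      fix i assume i: "i = lo + int (Suc n) \<and> i \<le> int g"
      then have "bt i = bt (i-1)" by (intro st) auto
      moreover have "i - 1 = lo + int n \<and> i - 1 \<le> int g" using i by simp
      ultimately show "bt i = 0" using Suc.IH by metis
    qed
  qed
  note all = this
  have "bt j = 0" if "j \<in> J" for j
  proof -
    have "j = lo + int (nat (j - lo)) \<and> j \<le> int g" using that by auto
    then show ?thesis using all[of "nat (j - lo)"] by blast
  qed
  then show ?thesis using a0 by (auto simp: bt_def)
qed


lemma B_le1: "i \<in> {lo..int g} \<Longrightarrow> x \<in> {a..b} \<Longrightarrow> B k i x \<le> 1"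
proof -
  assume i: "i \<in> {lo..int g}" and x: "x \<in> {a..b}"
  have "B k i x \<le> (\<Sum>j\<in>{lo..int g}. B k j x)"
    using i by (intro member_le_sum nonneg) auto
  also have "\<dots> = 1" using pou[of k x] x by simp
  finally show ?thesis .
qed

lemma Z_good: "j \<in> J \<Longrightarrow> goodf (zbspline lam b k j) 0 a b"
proof -
  assume j: "j \<in> J"
  define l1 where "l1 = lam (j + int k + 1) - lam j"
  define l2 where "l2 = lam (j + int k + 2) - lam (j+1)"
  have l1: "l1 > 0" unfolding l1_def using lam_len_pos[of j] j by auto
  have e: "j + 1 + int k + 1 = j + int k + 2" by simp
  have l2: "l2 > 0" unfolding l2_def using lam_len_pos[of "j+1"] j unfolding e by auto
  have "\<bar>zbspline lam b k j x\<bar> \<le> real (k+1) * (1 / l1 + 1 / l2)" if x: "x \<in> {a..b}" for x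
  proof -
    have b1: "0 \<le> B k j x / l1" "B k j x / l1 \<le> 1 / l1"
      using nonneg[of j k x] B_le1[of j x] j x l1 by (auto intro!: divide_right_mono)
    have b2: "0 \<le> B k (j+1) x / l2" "B k (j+1) x / l2 \<le> 1 / l2"
      using nonneg[of "j+1" k x] B_le1[of "j+1" x] j x l2 by (auto intro!: divide_right_mono)
    have "\<bar>B k j x / l1 - B k (j+1) x / l2\<bar> \<le> 1 / l1 + 1 / l2" using b1 b2 by linarith
    then show ?thesis unfolding zbspline_def l1_def[symmetric] l2_def[symmetric]
      by (simp add: abs_mult mult_left_mono)
  qed
  moreover have "zbspline lam b k j \<in> borel_measurable borel" unfolding zbspline_def
    using meas_B[of lam b k j] meas_B[of lam b k "j+1"] by measurable
  moreover have "(zbspline lam b k j has_integral 0) {a..b}" using zb_int[of j] j by auto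
  ultimately show ?thesis unfolding goodf_def by blast
qed

end


lemma uniq_core:
  assumes X: "kseq a b g k lam" and Y: "kseq c d h l mu"
    and E1: "\<forall>x\<in>{a..b}. \<forall>y\<in>{c..d}.
        s x y = (\<Sum>i\<in>{- int k..int g - 1}. \<Sum>j\<in>{- int l..int h - 1}.
                   z1 (i, j) * (zbspline lam b k i x * zbspline mu d l j y))
              + (\<Sum>i\<in>{- int k..int g - 1}. v1 i * zbspline lam b k i x)
              + (\<Sum>j\<in>{- int l..int h - 1}. u1 j * zbspline mu d l j y)"
    and E2: "\<forall>x\<in>{a..b}. \<forall>y\<in>{c..d}.
        s x y = (\<Sum>i\<in>{- int k..int g - 1}. \<Sum>j\<in>{- int l..int h - 1}.
                   z2 (i, j) * (zbspline lam b k i x * zbspline mu d l j y))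
              + (\<Sum>i\<in>{- int k..int g - 1}. v2 i * zbspline lam b k i x)
              + (\<Sum>j\<in>{- int l..int h - 1}. u2 j * zbspline mu d l j y)"
  shows "(\<forall>i\<in>{- int k..int g - 1}. \<forall>j\<in>{- int l..int h - 1}. z1 (i, j) = z2 (i, j))
    \<and> (\<forall>i\<in>{- int k..int g - 1}. v1 i = v2 i) \<and> (\<forall>j\<in>{- int l..int h - 1}. u1 j = u2 j)"
proof -
  interpret X: kseq a b g k lam by (rule X)
  interpret Y: kseq c d h l mu by (rule Y)
  define al where "al y = (\<Sum>j\<in>{- int l..int h - 1}. (u1 j - u2 j) * zbspline mu d l j y)" for y
  define be where "be y i = (v1 i - v2 i) + (\<Sum>j\<in>{- int l..int h - 1}. (z1 (i, j) - z2 (i, j)) * zbspline mu d l j y)" for y i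
  have D: "al y + (\<Sum>i\<in>{- int k..int g - 1}. be y i * zbspline lam b k i x) = 0"
    if x: "x \<in> {a..b}" and y: "y \<in> {c..d}" for x y
  proof -
    have "al y + (\<Sum>i\<in>{- int k..int g - 1}. be y i * zbspline lam b k i x)
      = ((\<Sum>i\<in>{- int k..int g - 1}. \<Sum>j\<in>{- int l..int h - 1}.
                   z1 (i, j) * (zbspline lam b k i x * zbspline mu d l j y))
              + (\<Sum>i\<in>{- int k..int g - 1}. v1 i * zbspline lam b k i x)
              + (\<Sum>j\<in>{- int l..int h - 1}. u1 j * zbspline mu d l j y))
       - ((\<Sum>i\<in>{- int k..int g - 1}. \<Sum>j\<in>{- int l..int h - 1}.
                   z2 (i, j) * (zbspline lam b k i x * zbspline mu d l j y))
              + (\<Sum>i\<in>{- int k..int g - 1}. v2 i * zbspline lam b k i x)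
              + (\<Sum>j\<in>{- int l..int h - 1}. u2 j * zbspline mu d l j y))"
      unfolding al_def be_def
      by (simp add: algebra_simps sum_subtractf sum.distrib sum_distrib_left sum_distrib_right)
    also have "\<dots> = 0" using E1 E2 x y by simp
    finally show ?thesis .
  qed
  have A1: "al y = 0 \<and> (\<forall>i\<in>{- int k..int g - 1}. be y i = 0)" if y: "y \<in> {c..d}" for y
    using D y by (intro X.indep_Z) auto
  have "\<forall>y\<in>{c..d}. 0 + (\<Sum>j\<in>{- int l..int h - 1}. (u1 j - u2 j) * zbspline mu d l j y) = 0"
    using A1 unfolding al_def by simp
  from Y.indep_Z[OF this] have U: "\<forall>j\<in>{- int l..int h - 1}. u1 j = u2 j" by simp
  have VZ: "v1 i - v2 i = 0 \<and> (\<forall>j\<in>{- int l..int h - 1}. z1 (i, j) - z2 (i, j) = 0)"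
    if i: "i \<in> {- int k..int g - 1}" for i
  proof -
    have "\<forall>y\<in>{c..d}. (v1 i - v2 i) + (\<Sum>j\<in>{- int l..int h - 1}. (z1 (i, j) - z2 (i, j)) * zbspline mu d l j y) = 0"
      using A1 i unfolding be_def by auto
    from Y.indep_Z[OF this] show ?thesis .
  qed
  show ?thesis using U VZ by auto
qed

theorem corollary2:
  fixes a b c d :: real and g h k l :: nat and lam mu :: "int \<Rightarrow> real"
    and s :: "real \<Rightarrow> real \<Rightarrow> real"
  assumes "knot_seq a b g k lam" and "knot_seq c d h l mu"
    and "s \<in> zspline_space a b c d g h k l lam mu"
  shows "\<exists>!(z, v, u).
     z \<in> ({- int k..int g - 1} \<times> {- int l..int h - 1}) \<rightarrow>\<^sub>E (UNIV :: real set) \<and>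
     v \<in> {- int k..int g - 1} \<rightarrow>\<^sub>E (UNIV :: real set) \<and>
     u \<in> {- int l..int h - 1} \<rightarrow>\<^sub>E (UNIV :: real set) \<and>
     (\<forall>x\<in>{a..b}. \<forall>y\<in>{c..d}.
        s x y = (\<Sum>i\<in>{- int k..int g - 1}. \<Sum>j\<in>{- int l..int h - 1}.
                   z (i, j) * (zbspline lam b k i x * zbspline mu d l j y))
              + (\<Sum>i\<in>{- int k..int g - 1}. v i * zbspline lam b k i x)
              + (\<Sum>j\<in>{- int l..int h - 1}. u j * zbspline mu d l j y))"
proof -
  interpret X: kseq a b g k lam by unfold_locales (rule assms(1))
  interpret Y: kseq c d h l mu by unfold_locales (rule assms(2))
  have Xk: "kseq a b g k lam" "kseq c d h l mu" by unfold_locales (rule assms(1), rule assms(2))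
  obtain coef where coef: "\<forall>x\<in>{a..b}. \<forall>y\<in>{c..d}. s x y = (\<Sum>i\<in>{- int k..int g}. \<Sum>j\<in>{- int l..int h}.
         coef i j * bspline lam b k i x * bspline mu d l j y)"
    and int0: "integral (cbox (a, c) (b, d)) (\<lambda>(x, y). s x y) = 0"
    using assms(3) unfolding zspline_space_def spline_space_def by blast
  have "\<forall>i\<in>{- int k..int g}. \<exists>ab. \<forall>x\<in>{a..b}. bspline lam b k i x = fst ab + (\<Sum>p\<in>{- int k..int g - 1}. snd ab p * zbspline lam b k p x)"
  proof
    fix i assume "i \<in> {- int k..int g}"
    then have "X.inspan (bspline lam b k i)" by (intro X.insp_B) auto
    then obtain \<alpha> \<beta> where "\<forall>x\<in>{a..b}. bspline lam b k i x = \<alpha> + (\<Sum>p\<in>{- int k..int g - 1}. \<beta> p * zbspline lam b k p x)"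
      unfolding X.inspan_def by blast
    then show "\<exists>ab. \<forall>x\<in>{a..b}. bspline lam b k i x = fst ab + (\<Sum>p\<in>{- int k..int g - 1}. snd ab p * zbspline lam b k p x)"
      by (intro exI[of _ "(\<alpha>, \<beta>)"]) simp
  qed
  from bchoice[OF this] obtain FX where FX: "\<forall>i\<in>{- int k..int g}. \<forall>x\<in>{a..b}. bspline lam b k i x = fst (FX i) + (\<Sum>p\<in>{- int k..int g - 1}. snd (FX i) p * zbspline lam b k p x)"
    by blast
  have "\<forall>j\<in>{- int l..int h}. \<exists>ab. \<forall>y\<in>{c..d}. bspline mu d l j y = fst ab + (\<Sum>q\<in>{- int l..int h - 1}. snd ab q * zbspline mu d l q y)"
  proof
    fix j assume "j \<in> {- int l..int h}"
    then have "Y.inspan (bspline mu d l j)" by (intro Y.insp_B) auto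
    then obtain \<alpha> \<beta> where "\<forall>y\<in>{c..d}. bspline mu d l j y = \<alpha> + (\<Sum>q\<in>{- int l..int h - 1}. \<beta> q * zbspline mu d l q y)"
      unfolding Y.inspan_def by blast
    then show "\<exists>ab. \<forall>y\<in>{c..d}. bspline mu d l j y = fst ab + (\<Sum>q\<in>{- int l..int h - 1}. snd ab q * zbspline mu d l q y)"
      by (intro exI[of _ "(\<alpha>, \<beta>)"]) simp
  qed
  from bchoice[OF this] obtain FY where FY: "\<forall>j\<in>{- int l..int h}. \<forall>y\<in>{c..d}. bspline mu d l j y = fst (FY j) + (\<Sum>q\<in>{- int l..int h - 1}. snd (FY j) q * zbspline mu d l q y)"
    by blast
  define ax where "ax i = fst (FX i)" for i
  define bx where "bx i = snd (FX i)" for i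
  define ay where "ay j = fst (FY j)" for j
  define bY where "bY j = snd (FY j)" for j
  define C where "C = (\<Sum>i\<in>{- int k..int g}. \<Sum>j\<in>{- int l..int h}. coef i j * ax i * ay j)"
  define v0 where "v0 p = (\<Sum>i\<in>{- int k..int g}. \<Sum>j\<in>{- int l..int h}. coef i j * ay j * bx i p)" for p
  define u0 where "u0 q = (\<Sum>i\<in>{- int k..int g}. \<Sum>j\<in>{- int l..int h}. coef i j * ax i * bY j q)" for q
  define z0 where "z0 p q = (\<Sum>i\<in>{- int k..int g}. \<Sum>j\<in>{- int l..int h}. coef i j * bx i p * bY j q)" for p q
  have rep: "s x y = C + (\<Sum>p\<in>{- int k..int g - 1}. v0 p * zbspline lam b k p x)
      + (\<Sum>q\<in>{- int l..int h - 1}. u0 q * zbspline mu d l q y)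
      + (\<Sum>p\<in>{- int k..int g - 1}. \<Sum>q\<in>{- int l..int h - 1}. z0 p q * (zbspline lam b k p x * zbspline mu d l q y))"
    if x: "x \<in> {a..b}" and y: "y \<in> {c..d}" for x y
  proof -
    have "s x y = (\<Sum>i\<in>{- int k..int g}. \<Sum>j\<in>{- int l..int h}. coef i j *
       ((ax i + (\<Sum>p\<in>{- int k..int g - 1}. bx i p * zbspline lam b k p x)) *
        (ay j + (\<Sum>q\<in>{- int l..int h - 1}. bY j q * zbspline mu d l q y))))"
      using coef x y FX FY unfolding ax_def bx_def ay_def bY_def by (auto intro!: sum.cong simp: mult.assoc)
    also have "\<dots> = C + (\<Sum>p\<in>{- int k..int g - 1}. v0 p * zbspline lam b k p x)
      + (\<Sum>q\<in>{- int l..int h - 1}. u0 q * zbspline mu d l q y)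
      + (\<Sum>p\<in>{- int k..int g - 1}. \<Sum>q\<in>{- int l..int h - 1}. z0 p q * (zbspline lam b k p x * zbspline mu d l q y))"
      unfolding C_def v0_def u0_def z0_def by (rule expand)
    finally show ?thesis .
  qed
  have ab: "a < b" and cd: "c < d" using X.ab Y.ab by auto
  have I1: "((\<lambda>p. C) has_integral (C * (b - a)) * (1 * (d - c))) (cbox (a, c) (b, d))"
    by (rule good_prod[OF good_const[of a b C] good_const[of c d 1]]) (use ab cd in auto)
  have I2: "((\<lambda>p. \<Sum>q\<in>{- int k..int g - 1}. v0 q * zbspline lam b k q (fst p)) has_integral (\<Sum>q\<in>{- int k..int g - 1}. 0)) (cbox (a, c) (b, d))"
  proof (intro has_integral_sum)
    fix q assume q: "q \<in> {- int k..int g - 1}"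
    show "((\<lambda>p. v0 q * zbspline lam b k q (fst p)) has_integral 0) (cbox (a, c) (b, d))"
      by (rule good_prod[OF good_scale[OF X.Z_good] good_const[of c d 1]]) (use q cd in auto)
  qed simp
  have I3: "((\<lambda>p. \<Sum>q\<in>{- int l..int h - 1}. u0 q * zbspline mu d l q (snd p)) has_integral (\<Sum>q\<in>{- int l..int h - 1}. 0)) (cbox (a, c) (b, d))"
  proof (intro has_integral_sum)
    fix q assume q: "q \<in> {- int l..int h - 1}"
    show "((\<lambda>p. u0 q * zbspline mu d l q (snd p)) has_integral 0) (cbox (a, c) (b, d))"
      by (rule good_prod[OF good_const[of a b 1] good_scale[OF Y.Z_good]]) (use q ab in auto)
  qed simp
  have I4: "((\<lambda>pp. \<Sum>p\<in>{- int k..int g - 1}. \<Sum>q\<in>{- int l..int h - 1}. z0 p q * (zbspline lam b k p (fst pp) * zbspline mu d l q (snd pp)))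
      has_integral (\<Sum>p\<in>{- int k..int g - 1}. \<Sum>q\<in>{- int l..int h - 1}. 0)) (cbox (a, c) (b, d))"
  proof (intro has_integral_sum)
    fix p q assume p: "p \<in> {- int k..int g - 1}" and q: "q \<in> {- int l..int h - 1}"
    show "((\<lambda>pp. z0 p q * (zbspline lam b k p (fst pp) * zbspline mu d l q (snd pp))) has_integral 0) (cbox (a, c) (b, d))"
      by (rule good_prod[OF good_scale[OF X.Z_good] Y.Z_good]) (use p q in auto)
  qed simp_all
  have IE: "((\<lambda>pp. C + (\<Sum>p\<in>{- int k..int g - 1}. v0 p * zbspline lam b k p (fst pp))
      + (\<Sum>q\<in>{- int l..int h - 1}. u0 q * zbspline mu d l q (snd pp))
      + (\<Sum>p\<in>{- int k..int g - 1}. \<Sum>q\<in>{- int l..int h - 1}. z0 p q * (zbspline lam b k p (fst pp) * zbspline mu d l q (snd pp))))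
     has_integral (C * (b - a)) * (1 * (d - c)) + (\<Sum>q\<in>{- int k..int g - 1}. 0) + (\<Sum>q\<in>{- int l..int h - 1}. 0)
       + (\<Sum>p\<in>{- int k..int g - 1}. \<Sum>q\<in>{- int l..int h - 1}. 0)) (cbox (a, c) (b, d))"
    by (intro has_integral_add I1 I2 I3 I4)
  have "((\<lambda>(x, y). s x y) has_integral (C * (b - a)) * (1 * (d - c)) + (\<Sum>q\<in>{- int k..int g - 1}. 0) + (\<Sum>q\<in>{- int l..int h - 1}. 0)
       + (\<Sum>p\<in>{- int k..int g - 1}. \<Sum>q\<in>{- int l..int h - 1}. 0)) (cbox (a, c) (b, d))"
  proof (rule has_integral_eq[OF _ IE])
    fix pp :: "real \<times> real" assume pp: "pp \<in> cbox (a, c) (b, d)"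
    obtain x y where xy: "pp = (x, y)" by (cases pp)
    have "x \<in> {a..b}" "y \<in> {c..d}" using pp unfolding xy by (auto simp: cbox_Pair_iff)
    then show "C + (\<Sum>p\<in>{- int k..int g - 1}. v0 p * zbspline lam b k p (fst pp))
      + (\<Sum>q\<in>{- int l..int h - 1}. u0 q * zbspline mu d l q (snd pp))
      + (\<Sum>p\<in>{- int k..int g - 1}. \<Sum>q\<in>{- int l..int h - 1}. z0 p q * (zbspline lam b k p (fst pp) * zbspline mu d l q (snd pp)))
      = (\<lambda>(x, y). s x y) pp" unfolding xy using rep by simp
  qed
  then have "integral (cbox (a, c) (b, d)) (\<lambda>(x, y). s x y) = C * (b - a) * (d - c)"
    by (simp add: integral_unique)
  then have C0: "C = 0" using int0 ab cd by simp
  define zw where "zw = restrict (\<lambda>(p, q). z0 p q) ({- int k..int g - 1} \<times> {- int l..int h - 1})"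
  define vw where "vw = restrict v0 {- int k..int g - 1}"
  define uw where "uw = restrict u0 {- int l..int h - 1}"
  let ?P = "\<lambda>z v u. z \<in> ({- int k..int g - 1} \<times> {- int l..int h - 1}) \<rightarrow>\<^sub>E (UNIV :: real set) \<and>
     v \<in> {- int k..int g - 1} \<rightarrow>\<^sub>E (UNIV :: real set) \<and>
     u \<in> {- int l..int h - 1} \<rightarrow>\<^sub>E (UNIV :: real set) \<and>
     (\<forall>x\<in>{a..b}. \<forall>y\<in>{c..d}.
        s x y = (\<Sum>i\<in>{- int k..int g - 1}. \<Sum>j\<in>{- int l..int h - 1}.
                   z (i, j) * (zbspline lam b k i x * zbspline mu d l j y))
              + (\<Sum>i\<in>{- int k..int g - 1}. v i * zbspline lam b k i x)
              + (\<Sum>j\<in>{- int l..int h - 1}. u j * zbspline mu d l j y))"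
  have W: "?P zw vw uw"
  proof (intro conjI)
    show "zw \<in> ({- int k..int g - 1} \<times> {- int l..int h - 1}) \<rightarrow>\<^sub>E (UNIV :: real set)"
      unfolding zw_def by simp
    show "vw \<in> {- int k..int g - 1} \<rightarrow>\<^sub>E (UNIV :: real set)" unfolding vw_def by simp
    show "uw \<in> {- int l..int h - 1} \<rightarrow>\<^sub>E (UNIV :: real set)" unfolding uw_def by simp
    show "\<forall>x\<in>{a..b}. \<forall>y\<in>{c..d}.
        s x y = (\<Sum>i\<in>{- int k..int g - 1}. \<Sum>j\<in>{- int l..int h - 1}.
                   zw (i, j) * (zbspline lam b k i x * zbspline mu d l j y))
              + (\<Sum>i\<in>{- int k..int g - 1}. vw i * zbspline lam b k i x)
              + (\<Sum>j\<in>{- int l..int h - 1}. uw j * zbspline mu d l j y)"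
    proof (intro ballI)
      fix x y assume x: "x \<in> {a..b}" and y: "y \<in> {c..d}"
      have e1: "(\<Sum>i\<in>{- int k..int g - 1}. \<Sum>j\<in>{- int l..int h - 1}. zw (i, j) * (zbspline lam b k i x * zbspline mu d l j y))
        = (\<Sum>p\<in>{- int k..int g - 1}. \<Sum>q\<in>{- int l..int h - 1}. z0 p q * (zbspline lam b k p x * zbspline mu d l q y))"
        unfolding zw_def by (intro sum.cong refl) auto
      have e2: "(\<Sum>i\<in>{- int k..int g - 1}. vw i * zbspline lam b k i x) = (\<Sum>p\<in>{- int k..int g - 1}. v0 p * zbspline lam b k p x)"
        unfolding vw_def by (intro sum.cong refl) auto
      have e3: "(\<Sum>j\<in>{- int l..int h - 1}. uw j * zbspline mu d l j y) = (\<Sum>q\<in>{- int l..int h - 1}. u0 q * zbspline mu d l q y)"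
        unfolding uw_def by (intro sum.cong refl) auto
      show "s x y = (\<Sum>i\<in>{- int k..int g - 1}. \<Sum>j\<in>{- int l..int h - 1}.
                   zw (i, j) * (zbspline lam b k i x * zbspline mu d l j y))
              + (\<Sum>i\<in>{- int k..int g - 1}. vw i * zbspline lam b k i x)
              + (\<Sum>j\<in>{- int l..int h - 1}. uw j * zbspline mu d l j y)"
        unfolding e1 e2 e3 rep[OF x y] C0 by simp
    qed
  qed
  show ?thesis
  proof (rule ex1I[of _ "(zw, vw, uw)"])
    show "case (zw, vw, uw) of (z, v, u) \<Rightarrow> ?P z v u" using W by simp
  next
    fix t assume t: "case t of (z, v, u) \<Rightarrow> ?P z v u"
    obtain z' v' u' where tt: "t = (z', v', u')" by (cases t)
    have P': "?P z' v' u'" using t tt by simp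
    have U: "(\<forall>i\<in>{- int k..int g - 1}. \<forall>j\<in>{- int l..int h - 1}. z' (i, j) = zw (i, j))
      \<and> (\<forall>i\<in>{- int k..int g - 1}. v' i = vw i) \<and> (\<forall>j\<in>{- int l..int h - 1}. u' j = uw j)"
      by (rule uniq_core[OF Xk, where s = s]) (use P' W in blast)+
    have "z' = zw" by (rule PiE_ext[of _ "{- int k..int g - 1} \<times> {- int l..int h - 1}" "\<lambda>_. UNIV"]) (use P' W U in auto)
    moreover have "v' = vw" by (rule PiE_ext[of _ "{- int k..int g - 1}" "\<lambda>_. UNIV"]) (use P' W U in auto)
    moreover have "u' = uw" by (rule PiE_ext[of _ "{- int l..int h - 1}" "\<lambda>_. UNIV"]) (use P' W U in auto)
    ultimately show "t = (zw, vw, uw)" using tt by simp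
  qed
qed



end
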